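(* Let $\delta>0$ and $\alpha\in(0,1)$ be fixed, and suppose the truncated kernel $\gamma_\alpha$ satisfies, for every $\boldsymbol{x}\in\Omega$, $$\int_\Omega \gamma_\alpha(\boldsymbol{x},\boldsymbol{y})\,d\boldsymbol{y}\le \frac{2}{\delta^2},\qquad \int_\Omega \gamma_\alpha(\boldsymbol{y},\boldsymbol{x})\,d\boldsymbol{y}\le K_1(\delta),\qquad \int_{\Omega_c}\frac{\gamma_\alpha(\boldsymbol{x},\boldsymbol{y})+\gamma_\alpha(\boldsymbol{y},\boldsymbol{x})}{2}\,d\boldsymbol{y}\ge K_2(\delta),$$ for some positive constants $K_1(\delta),K_2(\delta)$, and moreover $$\int_\Omega \frac{\gamma_\alpha(\boldsymbol{x},\boldsymbol{y})-\gamma_\alpha(\boldsymbol{y},\boldsymbol{x})}{2}\,d\boldsymbol{y}\ge 0\qquad\text{for all }\boldsymbol{x}\in\Omega.$$ Let $f\in L^2(\Omega)$. Then there exists a unique $u\in L^2_{n0}(\Omega)$ such that $\mathbf{B}(u,v)=\mathbf{F}(v)$ for all $v\in L^2_{n0}(\Omega)$ (the weak form of the nonlocal problem $-\mathcal{L}_{\delta,\alpha}u=f$ in $\Omega_s$, $u=0$ on $\Omega_c$), and this solution satisfies $$\|u\|_{L^2(\Omega)}\le \frac{2}{K_2(\delta)}\|f\|_{L^2(\Omega)}.$$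
   Context: Let $d\ge 1$ and let $\Omega_s\subset\mathbb{R}^d$ be a bounded Lipschitz domain. Let $\mathbf{A}(\boldsymbol{x})=(a^{i,j}(\boldsymbol{x}))_{i,j=1}^d$ be a symmetric matrix-valued function on $\mathbb{R}^d$ with Lipschitz continuous entries that is uniformly elliptic: $\lambda|\boldsymbol{\xi}|^2\le \boldsymbol{\xi}^T\mathbf{A}(\boldsymbol{x})\boldsymbol{\xi}\le\Lambda|\boldsymbol{\xi}|^2$ for all $\boldsymbol{\xi},\boldsymbol{x}\in\mathbb{R}^d$, with constants $0<\lambda\le\Lambda$. Fix $\delta>0$ and $\alpha\in(0,1)$, and let $\chi^2_\alpha(d)$ denote the $(1-\alpha)$-quantile of the chi-square distribution with $d$ degrees of freedom. Define the kernel $$\gamma(\boldsymbol{x},\boldsymbol{y})=\frac{2}{\delta^2}\,\frac{1}{\sqrt{(2\pi)^d\det(\delta^2\mathbf{A}(\boldsymbol{x}))}}\exp\Big(-\frac{(\boldsymbol{y}-\boldsymbol{x})^T\mathbf{A}(\boldsymbol{x})^{-1}(\boldsymbol{y}-\boldsymbol{x})}{2\delta^2}\Big),$$ the truncated influence region $B_{\delta,\mathbf{A},\alpha}(\boldsymbol{x})=\{\boldsymbol{y}\in\mathbb{R}^d:(\boldsymbol{y}-\boldsymbol{x})^T\mathbf{A}(\boldsymbol{x})^{-1}(\boldsymbol{y}-\boldsymbol{x})\le\delta^2\chi^2_\alpha(d)\}$, and the truncated kernel $\gamma_\alpha(\boldsymbol{x},\boldsymbol{y})=\gamma(\boldsymbol{x},\boldsymbol{y})$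 if $\boldsymbol{y}\in B_{\delta,\mathbf{A},\alpha}(\boldsymbol{x})$ and $\gamma_\alpha(\boldsymbol{x},\boldsymbol{y})=0$ otherwise. The interaction domain is $\Omega_c=\{\boldsymbol{y}\in\mathbb{R}^d\setminus\Omega_s:\exists\,\boldsymbol{x}\in\Omega_s,\ \boldsymbol{y}\in B_{\delta,\mathbf{A},\alpha}(\boldsymbol{x})\}$, and $\Omega=\Omega_s\cup\Omega_c$. The nonlocal operator is $\mathcal{L}_{\delta,\alpha}u(\boldsymbol{x})=\int_{\mathbb{R}^d}(u(\boldsymbol{y})-u(\boldsymbol{x}))\gamma_\alpha(\boldsymbol{x},\boldsymbol{y})\,d\boldsymbol{y}$. Let $L^2_{n0}(\Omega)=\{u\in L^2(\Omega): u=0 \text{ a.e. on }\Omega_c\}$, and define $$\mathbf{B}(u,v)=\int_\Omega\int_\Omega (u(\boldsymbol{x})-u(\boldsymbol{y}))v(\boldsymbol{x})\gamma_\alpha(\boldsymbol{x},\boldsymbol{y})\,d\boldsymbol{y}\,d\boldsymbol{x},\qquad \mathbf{F}(v)=\int_\Omega f(\boldsymbol{x})v(\boldsymbol{x})\,d\boldsymbol{x}.$$ *)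

theory Defs
  imports "HOL-Analysis.Analysis"
begin

definition chi2_density :: "nat \<Rightarrow> real \<Rightarrow> real" where
  "chi2_density k s =
     (if s > 0 then s powr (real k / 2 - 1) * exp (- s / 2) / (2 powr (real k / 2) * Gamma (real k / 2))
      else 0)"

definition chi2_cdf :: "nat \<Rightarrow> real \<Rightarrow> real" where
  "chi2_cdf k t = (\<integral>s\<in>{0..t}. chi2_density k s \<partial>lborel)"

definition chi2_quantile :: "nat \<Rightarrow> real \<Rightarrow> real" where
  "chi2_quantile k \<alpha> = (THE q. 0 < q \<and> chi2_cdf k q = 1 - \<alpha>)"

text \<open>Coordinate-free form of the usual definition: near every boundary point the set lies
  strictly below the graph of a Lipschitz function over the hyperplane orthogonal to some unit
  direction e.\<close>
definition lipschitz_domain :: "(real^'n) set \<Rightarrow> bool" where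
  "lipschitz_domain U \<longleftrightarrow> open U \<and> connected U \<and>
     (\<forall>p \<in> frontier U. \<exists>r>0. \<exists>e::real^'n. \<exists>g::real^'n \<Rightarrow> real. \<exists>L.
        norm e = 1 \<and> L-lipschitz_on UNIV g \<and>
        U \<inter> ball p r = {x \<in> ball p r. x \<bullet> e < g (x - (x \<bullet> e) *\<^sub>R e)})"

definition qform :: "(real^'n \<Rightarrow> real^'n^'n) \<Rightarrow> real^'n \<Rightarrow> real^'n \<Rightarrow> real" where
  "qform A x y = (y - x) \<bullet> (matrix_inv (A x) *v (y - x))"

definition gamma_kernel :: "(real^'n \<Rightarrow> real^'n^'n) \<Rightarrow> real \<Rightarrow> real^'n \<Rightarrow> real^'n \<Rightarrow> real" where
  "gamma_kernel A \<delta> x y =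
     2 / \<delta>\<^sup>2 * (1 / sqrt ((2 * pi) ^ CARD('n) * det ((\<delta>\<^sup>2) *\<^sub>R A x)))
       * exp (- qform A x y / (2 * \<delta>\<^sup>2))"

definition influence_region :: "(real^'n \<Rightarrow> real^'n^'n) \<Rightarrow> real \<Rightarrow> real \<Rightarrow> real^'n \<Rightarrow> (real^'n) set" where
  "influence_region A \<delta> \<alpha> x = {y. qform A x y \<le> \<delta>\<^sup>2 * chi2_quantile CARD('n) \<alpha>}"

definition gamma_trunc :: "(real^'n \<Rightarrow> real^'n^'n) \<Rightarrow> real \<Rightarrow> real \<Rightarrow> real^'n \<Rightarrow> real^'n \<Rightarrow> real" where
  "gamma_trunc A \<delta> \<alpha> x y = (if y \<in> influence_region A \<delta> \<alpha> x then gamma_kernel A \<delta> x y else 0)"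

definition interaction_domain :: "(real^'n \<Rightarrow> real^'n^'n) \<Rightarrow> real \<Rightarrow> real \<Rightarrow> (real^'n) set \<Rightarrow> (real^'n) set" where
  "interaction_domain A \<delta> \<alpha> S = {y. y \<notin> S \<and> (\<exists>x\<in>S. y \<in> influence_region A \<delta> \<alpha> x)}"

definition L2 :: "(real^'n) set \<Rightarrow> (real^'n \<Rightarrow> real) set" where
  "L2 U = {u. u \<in> borel_measurable (lebesgue_on U) \<and> integrable (lebesgue_on U) (\<lambda>x. (u x)\<^sup>2)}"

definition L2_norm :: "(real^'n) set \<Rightarrow> (real^'n \<Rightarrow> real) \<Rightarrow> real" where
  "L2_norm U u = sqrt (integral\<^sup>L (lebesgue_on U) (\<lambda>x. (u x)\<^sup>2))"

definition L2_n0 :: "(real^'n) set \<Rightarrow> (real^'n) set \<Rightarrow> (real^'n \<Rightarrow> real) set" where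
  "L2_n0 U C = {u \<in> L2 U. AE x in lebesgue_on U. x \<in> C \<longrightarrow> u x = 0}"

definition bform :: "(real^'n \<Rightarrow> real^'n \<Rightarrow> real) \<Rightarrow> (real^'n) set
                     \<Rightarrow> (real^'n \<Rightarrow> real) \<Rightarrow> (real^'n \<Rightarrow> real) \<Rightarrow> real" where
  "bform \<gamma> U u v = integral\<^sup>L (lebesgue_on U)
      (\<lambda>x. integral\<^sup>L (lebesgue_on U) (\<lambda>y. (u x - u y) * v x * \<gamma> x y))"

definition Ffun :: "(real^'n) set \<Rightarrow> (real^'n \<Rightarrow> real) \<Rightarrow> (real^'n \<Rightarrow> real) \<Rightarrow> real" where
  "Ffun U f v = integral\<^sup>L (lebesgue_on U) (\<lambda>x. f x * v x)"

end

theory Submission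
  imports Defs
begin

lemma discr_le:
  fixes A B C :: real
  assumes "\<And>t. 0 \<le> A + 2 * t * B + t^2 * C" "0 \<le> C"
  shows "B^2 \<le> A * C"
proof (cases "C = 0")
  case True
  have "B = 0"
  proof (rule ccontr)
    assume "B \<noteq> 0"
    have "0 \<le> A + 2 * (-(A+1)/(2*B)) * B" using assms(1)[of "-(A+1)/(2*B)"] True by simp
    also have "\<dots> = -1" using \<open>B \<noteq> 0\<close> by (simp add: field_simps)
    finally show False by simp
  qed
  then show ?thesis using True by simp
next
  case False
  hence C: "C > 0" using assms(2) by simp
  have "0 \<le> A + 2 * (-B/C) * B + (-B/C)^2 * C" using assms(1) .
  also have "\<dots> = A - B^2 / C" using C by (simp add: field_simps power2_eq_square)
  finally have "B^2 / C \<le> A" by simp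
  then show ?thesis using C by (simp add: field_simps)
qed

lemma L2_prod_integrable:
  fixes p q :: "'a \<Rightarrow> real"
  assumes [measurable]: "p \<in> borel_measurable M" "q \<in> borel_measurable M"
    and ip: "integrable M (\<lambda>x. (p x)^2)" and iq: "integrable M (\<lambda>x. (q x)^2)"
  shows "integrable M (\<lambda>x. p x * q x)"
proof (rule Bochner_Integration.integrable_bound[OF Bochner_Integration.integrable_add[OF ip iq]])
  show "(\<lambda>x. p x * q x) \<in> borel_measurable M" by measurable
  show "AE x in M. norm (p x * q x) \<le> norm ((p x)^2 + (q x)^2)"
  proof (rule AE_I2)
    fix x
    have "\<bar>p x * q x\<bar> \<le> (p x)^2 + (q x)^2"
    proof -
      have "0 \<le> (\<bar>p x\<bar> - \<bar>q x\<bar>)^2" by simp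
      hence "2 * (\<bar>p x\<bar> * \<bar>q x\<bar>) \<le> \<bar>p x\<bar>^2 + \<bar>q x\<bar>^2" by (simp add: power2_eq_square algebra_simps)
      moreover have "0 \<le> \<bar>p x\<bar> * \<bar>q x\<bar>" by simp
      ultimately have "\<bar>p x\<bar> * \<bar>q x\<bar> \<le> (p x)^2 + (q x)^2" using power2_abs[of "p x"] power2_abs[of "q x"] by linarith
      then show ?thesis by (simp add: abs_mult)
    qed
    then show "norm (p x * q x) \<le> norm ((p x)^2 + (q x)^2)" by simp
  qed
qed

lemma L2_CS:
  fixes p q :: "'a \<Rightarrow> real"
  assumes [measurable]: "p \<in> borel_measurable M" "q \<in> borel_measurable M"
    and ip: "integrable M (\<lambda>x. (p x)^2)" and iq: "integrable M (\<lambda>x. (q x)^2)"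
  shows "(\<integral>x. p x * q x \<partial>M)^2 \<le> (\<integral>x. (p x)^2 \<partial>M) * (\<integral>x. (q x)^2 \<partial>M)"
proof (rule discr_le)
  have ipq: "integrable M (\<lambda>x. p x * q x)" by (rule L2_prod_integrable) (use assms in auto)
  fix t :: real
  have "0 \<le> (\<integral>x. (p x + t * q x)^2 \<partial>M)" by (rule integral_nonneg_AE) auto
  also have "(\<integral>x. (p x + t * q x)^2 \<partial>M) = (\<integral>x. (p x)^2 + 2 * t * (p x * q x) + t^2 * (q x)^2 \<partial>M)"
    by (rule Bochner_Integration.integral_cong) (auto simp: power2_eq_square algebra_simps)
  also have "\<dots> = (\<integral>x. (p x)^2 \<partial>M) + 2 * t * (\<integral>x. p x * q x \<partial>M) + t^2 * (\<integral>x. (q x)^2 \<partial>M)"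
    using ip iq ipq by simp
  finally show "0 \<le> (\<integral>x. (p x)^2 \<partial>M) + 2 * t * (\<integral>x. p x * q x \<partial>M) + t^2 * (\<integral>x. (q x)^2 \<partial>M)" .
  show "0 \<le> (\<integral>x. (q x)^2 \<partial>M)" by (rule integral_nonneg_AE) auto
qed

locale nl =
  fixes M :: "'a measure" and Os Oc :: "'a set" and G :: "'a \<Rightarrow> 'a \<Rightarrow> real"
    and A1 K1 K2 :: real and f :: "'a \<Rightarrow> real"
  assumes sfin: "sigma_finite_measure M"
    and Os_m[measurable]: "Os \<in> sets M" and Oc_m[measurable]: "Oc \<in> sets M"
    and disj: "Os \<inter> Oc = {}"
    and Gm: "(\<lambda>p. G (fst p) (snd p)) \<in> borel_measurable (M \<Otimes>\<^sub>M M)"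
    and Gnn: "\<And>x y. 0 \<le> G x y"
    and Gint1: "\<And>x. integrable M (\<lambda>y. G x y)" and Gint2: "\<And>x. integrable M (\<lambda>y. G y x)"
    and h1: "\<And>x. (\<integral>y. G x y \<partial>M) \<le> A1" and h2: "\<And>x. (\<integral>y. G y x \<partial>M) \<le> K1"
    and h3: "\<And>x. x \<in> Os \<Longrightarrow> 2 * K2 \<le> (\<integral>y. indicator Oc y * (G x y + G y x) \<partial>M)"
    and h4: "\<And>x. x \<in> Os \<Longrightarrow> (\<integral>y. G y x \<partial>M) \<le> (\<integral>y. G x y \<partial>M)"
    and K2pos: "0 < K2" and A1pos: "0 < A1"
    and fm[measurable]: "f \<in> borel_measurable M" and fi: "integrable M (\<lambda>x. (f x)^2)"
begin

sublocale P: pair_sigma_finite M M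
  using sfin by (simp add: pair_sigma_finite_def)

lemma Gm'[measurable]: "(\<lambda>p. G (fst p) (snd p)) \<in> borel_measurable (M \<Otimes>\<^sub>M M)"
  by (rule Gm)

lemma Gsw[measurable]: "(\<lambda>p. G (snd p) (fst p)) \<in> borel_measurable (M \<Otimes>\<^sub>M M)"
proof -
  have "(\<lambda>p. (\<lambda>p. G (fst p) (snd p)) ((\<lambda>(x,y). (y,x)) p)) \<in> borel_measurable (M \<Otimes>\<^sub>M M)"
    by (rule measurable_compose[OF measurable_pair_swap' Gm])
  then show ?thesis by (simp add: case_prod_unfold)
qed

lemma Gx_m[measurable]: "(\<lambda>y. G x y) \<in> borel_measurable M"
  using Gint1[of x] by simp

lemma Gy_m[measurable]: "(\<lambda>y. G y x) \<in> borel_measurable M"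
  using Gint2[of x] by simp

definition "a x = (\<integral>y. G x y \<partial>M)"
definition "b x = (\<integral>y. G y x \<partial>M)"
definition "L2s = {u :: 'a \<Rightarrow> real. u \<in> borel_measurable M \<and> integrable M (\<lambda>x. (u x)^2)}"
definition "V = {u \<in> L2s. \<forall>x. x \<notin> Os \<longrightarrow> u x = 0}"
definition "Kop (u :: 'a \<Rightarrow> real) x = (\<integral>y. u y * G x y \<partial>M)"
definition "Sop u x = u x * a x - Kop u x"
definition "Mc = 2 * A1^2 + 2 * A1 * K1"
definition "om = K2 / Mc"
definition "Qc = max 0 (1 - K2^2 / Mc)"

lemma a_m[measurable]: "a \<in> borel_measurable M"
  unfolding a_def by (rule sigma_finite_measure.borel_measurable_lebesgue_integral[OF sfin]) simp

lemma b_m[measurable]: "b \<in> borel_measurable M"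
  unfolding b_def by (rule sigma_finite_measure.borel_measurable_lebesgue_integral[OF sfin]) simp

lemma a_nn: "0 \<le> a x" unfolding a_def by (rule integral_nonneg_AE) (simp add: Gnn)
lemma b_nn: "0 \<le> b x" unfolding b_def by (rule integral_nonneg_AE) (simp add: Gnn)
lemma a_le: "a x \<le> A1" unfolding a_def by (rule h1)
lemma b_le: "b x \<le> K1" unfolding b_def by (rule h2)
lemma K1_nn: "0 \<le> K1" using b_nn b_le by (meson order.trans)
lemma Mc_pos: "0 < Mc" unfolding Mc_def using A1pos K1_nn by (simp add: add_pos_nonneg)
lemma om_pos: "0 < om" unfolding om_def using K2pos Mc_pos by simp
lemma Qc_nn: "0 \<le> Qc" unfolding Qc_def by simp
lemma Qc_lt1: "Qc < 1" unfolding Qc_def using K2pos Mc_pos by simp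

lemma L2sI: "u \<in> borel_measurable M \<Longrightarrow> integrable M (\<lambda>x. (u x)^2) \<Longrightarrow> u \<in> L2s"
  by (simp add: L2s_def)
lemma L2s_m[measurable_dest]: "u \<in> L2s \<Longrightarrow> u \<in> borel_measurable M" by (simp add: L2s_def)
lemma L2s_i: "u \<in> L2s \<Longrightarrow> integrable M (\<lambda>x. (u x)^2)" by (simp add: L2s_def)
lemma V_L2s: "u \<in> V \<Longrightarrow> u \<in> L2s" by (simp add: V_def)
lemma V_zero: "u \<in> V \<Longrightarrow> x \<notin> Os \<Longrightarrow> u x = 0" by (simp add: V_def)
lemma VI: "u \<in> L2s \<Longrightarrow> (\<And>x. x \<notin> Os \<Longrightarrow> u x = 0) \<Longrightarrow> u \<in> V" by (simp add: V_def)
lemma f_L2s: "f \<in> L2s" using fi by (simp add: L2sI)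

lemma L2s_bound:
  fixes w :: "'a \<Rightarrow> real"
  assumes "v \<in> L2s" "w \<in> borel_measurable M" "\<And>x. (w x)^2 \<le> C * (v x)^2"
  shows "w \<in> L2s"
proof (rule L2sI[OF assms(2)])
  show "integrable M (\<lambda>x. (w x)^2)"
  proof (rule Bochner_Integration.integrable_bound[of _ "\<lambda>x. C * (v x)^2"])
    show "integrable M (\<lambda>x. C * (v x)^2)" using L2s_i[OF assms(1)] by simp
    show "(\<lambda>x. (w x)^2) \<in> borel_measurable M" using assms(2) by measurable
    show "AE x in M. norm ((w x)^2) \<le> norm (C * (v x)^2)"
      using assms(3) by (auto intro!: AE_I2 simp: order.trans[OF _ abs_ge_self])
  qed
qed

lemma sq_add_le: "((p::real) + q)^2 \<le> 2 * p^2 + 2 * q^2"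
proof -
  have "0 \<le> (p - q)^2" by simp
  then show ?thesis by (simp add: power2_eq_square algebra_simps)
qed

lemma sq_diff_le: "((p::real) - q)^2 \<le> 2 * p^2 + 2 * q^2"
  using sq_add_le[of p "-q"] by simp

lemma L2s_add: assumes "u \<in> L2s" "v \<in> L2s" shows "(\<lambda>x. u x + v x) \<in> L2s"
proof -
  have i: "integrable M (\<lambda>x. 2 * (u x)^2 + 2 * (v x)^2)"
    using L2s_i[OF assms(1)] L2s_i[OF assms(2)] by simp
  have m[measurable]: "u \<in> borel_measurable M" "v \<in> borel_measurable M" using assms by (auto simp: L2s_def)
  show ?thesis
  proof (rule L2sI)
    show "(\<lambda>x. u x + v x) \<in> borel_measurable M" by measurable
    show "integrable M (\<lambda>x. (u x + v x)^2)"
      by (rule Bochner_Integration.integrable_bound[OF i]) (auto intro!: AE_I2 simp: sq_add_le)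
  qed
qed

lemma L2s_cmult: assumes "u \<in> L2s" shows "(\<lambda>x. c * u x) \<in> L2s"
  by (rule L2s_bound[OF assms, of _ "c^2"]) (use assms in \<open>auto simp: power_mult_distrib\<close>)

lemma L2s_diff: assumes "u \<in> L2s" "v \<in> L2s" shows "(\<lambda>x. u x - v x) \<in> L2s"
  using L2s_add[OF assms(1) L2s_cmult[OF assms(2), of "-1"]] by simp

lemma L2s_ind: assumes "u \<in> L2s" shows "(\<lambda>x. indicator Os x * u x) \<in> L2s"
  by (rule L2s_bound[OF assms, of _ 1]) (use assms in \<open>auto simp: indicator_def\<close>)

lemma V_diff: assumes "u \<in> V" "v \<in> V" shows "(\<lambda>x. u x - v x) \<in> V"
  by (rule VI[OF L2s_diff[OF V_L2s[OF assms(1)] V_L2s[OF assms(2)]]]) (use assms in \<open>simp add: V_zero\<close>)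


lemma prod_int_x:
  assumes u: "u \<in> L2s"
  shows "integrable (M \<Otimes>\<^sub>M M) (\<lambda>(x,y). (u x)^2 * G x y)"
proof -
  have [measurable]: "u \<in> borel_measurable M" using u by (simp add: L2s_def)
  have iu: "integrable M (\<lambda>x. (u x)^2)" using L2s_i[OF u] .
  show ?thesis
  proof (rule P.Fubini_integrable)
    show "(\<lambda>(x,y). (u x)^2 * G x y) \<in> borel_measurable (M \<Otimes>\<^sub>M M)" by measurable
    show "AE x in M. integrable M (\<lambda>y. case (x, y) of (x, y) \<Rightarrow> (u x)^2 * G x y)"
      using Gint1 by (auto intro!: AE_I2)
    have eq: "(\<lambda>x. \<integral>y. norm (case (x, y) of (x, y) \<Rightarrow> (u x)^2 * G x y) \<partial>M) = (\<lambda>x. (u x)^2 * a x)"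
      by (auto simp: a_def Gnn abs_mult)
    show "integrable M (\<lambda>x. \<integral>y. norm (case (x, y) of (x, y) \<Rightarrow> (u x)^2 * G x y) \<partial>M)"
      unfolding eq
    proof (rule Bochner_Integration.integrable_bound[of _ "\<lambda>x. A1 * (u x)^2"])
      show "integrable M (\<lambda>x. A1 * (u x)^2)" using iu by simp
      show "(\<lambda>x. (u x)^2 * a x) \<in> borel_measurable M" by measurable
      show "AE x in M. norm ((u x)^2 * a x) \<le> norm (A1 * (u x)^2)"
        using a_nn a_le A1pos by (auto intro!: AE_I2 mult_right_mono simp: abs_mult mult.commute)
    qed
  qed
qed

lemma prod_int_x':
  assumes u: "u \<in> L2s"
  shows "integrable (M \<Otimes>\<^sub>M M) (\<lambda>(x,y). (u x)^2 * G y x)"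
proof -
  have [measurable]: "u \<in> borel_measurable M" using u by (simp add: L2s_def)
  have iu: "integrable M (\<lambda>x. (u x)^2)" using L2s_i[OF u] .
  show ?thesis
  proof (rule P.Fubini_integrable)
    show "(\<lambda>(x,y). (u x)^2 * G y x) \<in> borel_measurable (M \<Otimes>\<^sub>M M)" by measurable
    show "AE x in M. integrable M (\<lambda>y. case (x, y) of (x, y) \<Rightarrow> (u x)^2 * G y x)"
      using Gint2 by (auto intro!: AE_I2)
    have eq: "(\<lambda>x. \<integral>y. norm (case (x, y) of (x, y) \<Rightarrow> (u x)^2 * G y x) \<partial>M) = (\<lambda>x. (u x)^2 * b x)"
      by (auto simp: b_def Gnn abs_mult)
    show "integrable M (\<lambda>x. \<integral>y. norm (case (x, y) of (x, y) \<Rightarrow> (u x)^2 * G y x) \<partial>M)"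
      unfolding eq
    proof (rule Bochner_Integration.integrable_bound[of _ "\<lambda>x. K1 * (u x)^2"])
      show "integrable M (\<lambda>x. K1 * (u x)^2)" using iu by simp
      show "(\<lambda>x. (u x)^2 * b x) \<in> borel_measurable M" by measurable
      show "AE x in M. norm ((u x)^2 * b x) \<le> norm (K1 * (u x)^2)"
        using b_nn b_le K1_nn by (auto intro!: AE_I2 mult_right_mono simp: abs_mult mult.commute)
    qed
  qed
qed

lemma prod_int_y:
  assumes u: "u \<in> L2s"
  shows "integrable (M \<Otimes>\<^sub>M M) (\<lambda>(x,y). (u y)^2 * G x y)"
  using P.integrable_product_swap[OF prod_int_x'[OF u]] by (simp add: case_prod_unfold)

lemma pq_facts:
  fixes x :: 'a
  assumes um: "u \<in> borel_measurable M" and i: "integrable M (\<lambda>y. (u y)^2 * G x y)"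
  shows "integrable M (\<lambda>y. u y * G x y)"
    and "(Kop u x)^2 \<le> a x * (\<integral>y. (u y)^2 * G x y \<partial>M)"
proof -
  have [measurable]: "u \<in> borel_measurable M" by (fact um)
  define p where "p y = u y * sqrt (G x y)" for y
  define q where "q y = sqrt (G x y)" for y
  have [measurable]: "p \<in> borel_measurable M" "q \<in> borel_measurable M" unfolding p_def q_def by measurable
  have p2: "(p y)^2 = (u y)^2 * G x y" for y by (simp add: p_def power_mult_distrib Gnn)
  have q2: "(q y)^2 = G x y" for y by (simp add: q_def Gnn)
  have pq: "p y * q y = u y * G x y" for y
    by (simp add: p_def q_def Gnn mult.assoc)
  have ip: "integrable M (\<lambda>y. (p y)^2)" unfolding p2 by (fact i)
  have iq: "integrable M (\<lambda>y. (q y)^2)" unfolding q2 by (rule Gint1)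
  show "integrable M (\<lambda>y. u y * G x y)"
    using L2_prod_integrable[of p M q] ip iq unfolding pq by simp
  have "(\<integral>y. p y * q y \<partial>M)^2 \<le> (\<integral>y. (p y)^2 \<partial>M) * (\<integral>y. (q y)^2 \<partial>M)"
    by (rule L2_CS) (use ip iq in auto)
  then show "(Kop u x)^2 \<le> a x * (\<integral>y. (u y)^2 * G x y \<partial>M)"
    unfolding Kop_def a_def pq p2 q2 by (simp add: mult.commute)
qed

lemma Kop_m[measurable]: assumes [measurable]: "u \<in> borel_measurable M" shows "Kop u \<in> borel_measurable M"
  unfolding Kop_def by (rule sigma_finite_measure.borel_measurable_lebesgue_integral[OF sfin]) measurable

lemma Sop_m[measurable]: assumes [measurable]: "u \<in> borel_measurable M" shows "Sop u \<in> borel_measurable M"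
  unfolding Sop_def by measurable

lemma K_AE_int:
  assumes u: "u \<in> L2s"
  shows "AE x in M. integrable M (\<lambda>y. u y * G x y)"
proof -
  have "AE x in M. integrable M (\<lambda>y. (u y)^2 * G x y)"
    using P.AE_integrable_fst[of "\<lambda>x y. (u y)^2 * G x y"] prod_int_y[OF u] by simp
  then show ?thesis
    by eventually_elim (rule pq_facts(1)[OF L2s_m[OF u]])
qed

lemma Kop_L2:
  assumes u: "u \<in> L2s"
  shows "Kop u \<in> L2s" "(\<integral>x. (Kop u x)^2 \<partial>M) \<le> A1 * K1 * (\<integral>x. (u x)^2 \<partial>M)"
proof -
  have [measurable]: "u \<in> borel_measurable M" using u by (simp add: L2s_def)
  have iu: "integrable M (\<lambda>x. (u x)^2)" using L2s_i[OF u] .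
  define B where "B x = (\<integral>y. (u y)^2 * G x y \<partial>M)" for x
  have iy: "integrable (M \<Otimes>\<^sub>M M) (\<lambda>(x,y). (u y)^2 * G x y)" by (rule prod_int_y[OF u])
  have iB: "integrable M B"
    unfolding B_def using P.integrable_fst[of "\<lambda>x y. (u y)^2 * G x y"] iy by simp
  have B_nn: "0 \<le> B x" for x unfolding B_def by (rule integral_nonneg_AE) (simp add: Gnn)
  have "(\<integral>x. B x \<partial>M) = (\<integral>y. (\<integral>x. (u y)^2 * G x y \<partial>M) \<partial>M)"
    unfolding B_def using P.Fubini_integral[of "\<lambda>x y. (u y)^2 * G x y"] iy by simp
  also have "\<dots> = (\<integral>y. (u y)^2 * b y \<partial>M)" by (simp add: b_def)
  also have "\<dots> \<le> (\<integral>y. K1 * (u y)^2 \<partial>M)"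
  proof (rule integral_mono)
    show "integrable M (\<lambda>y. K1 * (u y)^2)" using iu by simp
    show "integrable M (\<lambda>y. (u y)^2 * b y)"
      by (rule Bochner_Integration.integrable_bound[of _ "\<lambda>x. K1 * (u x)^2"])
         (use iu b_nn b_le K1_nn in \<open>auto intro!: AE_I2 mult_right_mono simp: abs_mult mult.commute\<close>)
    show "(u y)^2 * b y \<le> K1 * (u y)^2" for y using mult_right_mono[OF b_le[of y], of "(u y)^2"] by (simp add: mult.commute)
  qed
  also have "\<dots> = K1 * (\<integral>y. (u y)^2 \<partial>M)" by simp
  finally have intB: "(\<integral>x. B x \<partial>M) \<le> K1 * (\<integral>y. (u y)^2 \<partial>M)" .
  have bnd: "AE x in M. (Kop u x)^2 \<le> A1 * B x"
  proof -
    have "AE x in M. integrable M (\<lambda>y. (u y)^2 * G x y)"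
      using P.AE_integrable_fst[of "\<lambda>x y. (u y)^2 * G x y"] iy by simp
    then show ?thesis
    proof eventually_elim
      case (elim x)
      have "(Kop u x)^2 \<le> a x * B x" unfolding B_def by (rule pq_facts(2)[OF _ elim]) simp
      also have "\<dots> \<le> A1 * B x" by (rule mult_right_mono[OF a_le B_nn])
      finally show ?case .
    qed
  qed
  have iK: "integrable M (\<lambda>x. (Kop u x)^2)"
    by (rule Bochner_Integration.integrable_bound[of _ "\<lambda>x. A1 * B x"])
       (use iB bnd B_nn A1pos in \<open>auto elim!: eventually_mono\<close>)
  show "Kop u \<in> L2s" by (rule L2sI) (use iK in auto)
  have "(\<integral>x. (Kop u x)^2 \<partial>M) \<le> (\<integral>x. A1 * B x \<partial>M)"
    by (rule integral_mono_AE) (use iK iB bnd in auto)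
  also have "\<dots> = A1 * (\<integral>x. B x \<partial>M)" by simp
  also have "\<dots> \<le> A1 * (K1 * (\<integral>y. (u y)^2 \<partial>M))" using intB A1pos by simp
  finally show "(\<integral>x. (Kop u x)^2 \<partial>M) \<le> A1 * K1 * (\<integral>x. (u x)^2 \<partial>M)" by (simp add: mult.assoc)
qed

lemma Sop_L2:
  assumes u: "u \<in> L2s"
  shows "Sop u \<in> L2s" "(\<integral>x. (Sop u x)^2 \<partial>M) \<le> Mc * (\<integral>x. (u x)^2 \<partial>M)"
proof -
  have [measurable]: "u \<in> borel_measurable M" using u by (simp add: L2s_def)
  have iu: "integrable M (\<lambda>x. (u x)^2)" using L2s_i[OF u] .
  have KL: "Kop u \<in> L2s" by (rule Kop_L2[OF u])
  have iK: "integrable M (\<lambda>x. (Kop u x)^2)" using L2s_i[OF KL] .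
  have pw: "(Sop u x)^2 \<le> 2 * A1^2 * (u x)^2 + 2 * (Kop u x)^2" for x
  proof -
    have "(Sop u x)^2 \<le> 2 * (u x * a x)^2 + 2 * (Kop u x)^2" unfolding Sop_def by (rule sq_diff_le)
    moreover have "(u x * a x)^2 \<le> A1^2 * (u x)^2"
    proof -
      have "(a x)^2 \<le> A1^2" using a_nn a_le by (intro power_mono) auto
      then show ?thesis using mult_right_mono[of "(a x)^2" "A1^2" "(u x)^2"] by (simp add: power_mult_distrib mult.commute)
    qed
    ultimately show ?thesis by simp
  qed
  have i2: "integrable M (\<lambda>x. 2 * A1^2 * (u x)^2 + 2 * (Kop u x)^2)" using iu iK by simp
  have iS: "integrable M (\<lambda>x. (Sop u x)^2)"
    by (rule Bochner_Integration.integrable_bound[OF i2]) (auto intro!: AE_I2 simp: pw order.trans[OF _ abs_ge_self])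
  show "Sop u \<in> L2s" by (rule L2sI) (use iS in auto)
  have "(\<integral>x. (Sop u x)^2 \<partial>M) \<le> (\<integral>x. 2 * A1^2 * (u x)^2 + 2 * (Kop u x)^2 \<partial>M)"
    by (rule integral_mono[OF iS i2 pw])
  also have "\<dots> = 2 * A1^2 * (\<integral>x. (u x)^2 \<partial>M) + 2 * (\<integral>x. (Kop u x)^2 \<partial>M)" using iu iK by simp
  also have "\<dots> \<le> 2 * A1^2 * (\<integral>x. (u x)^2 \<partial>M) + 2 * (A1 * K1 * (\<integral>x. (u x)^2 \<partial>M))"
    using Kop_L2(2)[OF u] by simp
  also have "\<dots> = Mc * (\<integral>x. (u x)^2 \<partial>M)" by (simp add: Mc_def algebra_simps)
  finally show "(\<integral>x. (Sop u x)^2 \<partial>M) \<le> Mc * (\<integral>x. (u x)^2 \<partial>M)" .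
qed

lemma Kop_diff_AE:
  assumes "u \<in> L2s" "v \<in> L2s"
  shows "AE x in M. Kop (\<lambda>y. u y - v y) x = Kop u x - Kop v x"
  using K_AE_int[OF assms(1)] K_AE_int[OF assms(2)]
  by eventually_elim (simp add: Kop_def left_diff_distrib)

lemma Sop_diff_AE:
  assumes "u \<in> L2s" "v \<in> L2s"
  shows "AE x in M. Sop (\<lambda>y. u y - v y) x = Sop u x - Sop v x"
  using Kop_diff_AE[OF assms] by eventually_elim (simp add: Sop_def algebra_simps)


lemma xy_int:
  assumes u: "u \<in> L2s"
  shows "integrable (M \<Otimes>\<^sub>M M) (\<lambda>(x,y). u x * u y * G x y)"
proof -
  have [measurable]: "u \<in> borel_measurable M" using u by (simp add: L2s_def)
  have i: "integrable (M \<Otimes>\<^sub>M M) (\<lambda>p. (\<lambda>(x,y). (u x)^2 * G x y) p + (\<lambda>(x,y). (u y)^2 * G x y) p)"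
    using prod_int_x[OF u] prod_int_y[OF u] by (rule Bochner_Integration.integrable_add)
  show ?thesis
  proof (rule Bochner_Integration.integrable_bound[OF i])
    show "(\<lambda>(x,y). u x * u y * G x y) \<in> borel_measurable (M \<Otimes>\<^sub>M M)" by measurable
    show "AE p in M \<Otimes>\<^sub>M M. norm ((\<lambda>(x,y). u x * u y * G x y) p)
        \<le> norm ((\<lambda>(x,y). (u x)^2 * G x y) p + (\<lambda>(x,y). (u y)^2 * G x y) p)"
    proof (rule AE_I2, clarsimp)
      fix x y
      have "\<bar>u x * u y\<bar> \<le> (u x)^2 + (u y)^2"
      proof -
        have "0 \<le> (\<bar>u x\<bar> - \<bar>u y\<bar>)^2" by simp
        hence "2 * (\<bar>u x\<bar> * \<bar>u y\<bar>) \<le> \<bar>u x\<bar>^2 + \<bar>u y\<bar>^2" by (simp add: power2_eq_square algebra_simps)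
        moreover have "0 \<le> \<bar>u x\<bar> * \<bar>u y\<bar>" by simp
        ultimately have "\<bar>u x\<bar> * \<bar>u y\<bar> \<le> (u x)^2 + (u y)^2" using power2_abs[of "u x"] power2_abs[of "u y"] by linarith
        then show ?thesis by (simp add: abs_mult)
      qed
      then have "\<bar>u x * u y\<bar> * G x y \<le> ((u x)^2 + (u y)^2) * G x y"
        by (rule mult_right_mono) (simp add: Gnn)
      then show "\<bar>u x * u y * G x y\<bar> \<le> \<bar>(u x)^2 * G x y + (u y)^2 * G x y\<bar>"
        using Gnn[of x y] by (simp add: abs_mult algebra_simps)
    qed
  qed
qed

lemma coerc:
  assumes uV: "u \<in> V"
  shows "K2 * (\<integral>x. (u x)^2 \<partial>M) \<le> (\<integral>x. u x * Sop u x \<partial>M)"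
proof -
  have u: "u \<in> L2s" using uV by (rule V_L2s)
  have [measurable]: "u \<in> borel_measurable M" using u by (simp add: L2s_def)
  have iu: "integrable M (\<lambda>x. (u x)^2)" using L2s_i[OF u] .
  have ix: "integrable (M \<Otimes>\<^sub>M M) (\<lambda>(x,y). (u x)^2 * G x y)" by (rule prod_int_x[OF u])
  have iy: "integrable (M \<Otimes>\<^sub>M M) (\<lambda>(x,y). (u y)^2 * G x y)" by (rule prod_int_y[OF u])
  have ixy: "integrable (M \<Otimes>\<^sub>M M) (\<lambda>(x,y). u x * u y * G x y)" by (rule xy_int[OF u])
  have ia: "integrable M (\<lambda>x. (u x)^2 * a x)"
    by (rule Bochner_Integration.integrable_bound[of _ "\<lambda>x. A1 * (u x)^2"])
       (use iu a_nn a_le A1pos in \<open>auto intro!: AE_I2 mult_right_mono simp: abs_mult mult.commute\<close>)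
  have ib: "integrable M (\<lambda>x. (u x)^2 * b x)"
    by (rule Bochner_Integration.integrable_bound[of _ "\<lambda>x. K1 * (u x)^2"])
       (use iu b_nn b_le K1_nn in \<open>auto intro!: AE_I2 mult_right_mono simp: abs_mult mult.commute\<close>)
  have iK: "integrable M (\<lambda>x. u x * Kop u x)"
    by (rule L2_prod_integrable) (use L2s_i[OF Kop_L2(1)[OF u]] iu in auto)
  define P where "P = (\<integral>x. (u x)^2 * a x \<partial>M)"
  define Q where "Q = (\<integral>x. (u x)^2 * b x \<partial>M)"
  define X where "X = (\<integral>x. u x * Kop u x \<partial>M)"
  define D where "D = integral\<^sup>L (M \<Otimes>\<^sub>M M) (\<lambda>(x,y). (u x - u y)^2 * G x y)"
  have P_eq: "integral\<^sup>L (M \<Otimes>\<^sub>M M) (\<lambda>(x,y). (u x)^2 * G x y) = P"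
    using P.integral_fst[of "\<lambda>x y. (u x)^2 * G x y"] ix by (simp add: P_def a_def)
  have Q_eq: "integral\<^sup>L (M \<Otimes>\<^sub>M M) (\<lambda>(x,y). (u y)^2 * G x y) = Q"
    using P.integral_snd[of "\<lambda>x y. (u y)^2 * G x y"] iy by (simp add: Q_def b_def)
  have X_eq: "integral\<^sup>L (M \<Otimes>\<^sub>M M) (\<lambda>(x,y). u x * u y * G x y) = X"
    using P.integral_fst[of "\<lambda>x y. u x * u y * G x y"] ixy by (simp add: X_def Kop_def mult.assoc)
  have D_eq: "D = P + Q - 2 * X"
  proof -
    have "D = integral\<^sup>L (M \<Otimes>\<^sub>M M) (\<lambda>p. ((\<lambda>(x,y). (u x)^2 * G x y) p + (\<lambda>(x,y). (u y)^2 * G x y) p)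
               - 2 * (\<lambda>(x,y). u x * u y * G x y) p)"
      unfolding D_def by (rule Bochner_Integration.integral_cong) (auto simp: power2_eq_square algebra_simps)
    also have "\<dots> = P + Q - 2 * X" using ix iy ixy P_eq Q_eq X_eq by simp
    finally show ?thesis .
  qed
  have QP: "Q \<le> P" unfolding P_def Q_def
  proof (rule integral_mono[OF ib ia])
    fix x show "(u x)^2 * b x \<le> (u x)^2 * a x"
    proof (cases "x \<in> Os")
      case True then show ?thesis using h4[OF True] by (simp add: a_def b_def mult_left_mono)
    next
      case False then show ?thesis using V_zero[OF uV False] by simp
    qed
  qed
  have DK: "2 * K2 * (\<integral>x. (u x)^2 \<partial>M) \<le> D"
  proof -
    define c1 where "c1 x = (\<integral>y. G x y * indicator Oc y \<partial>M)" for x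
    define c2 where "c2 x = (\<integral>y. G y x * indicator Oc y \<partial>M)" for x
    have c1_nn: "0 \<le> c1 x" for x unfolding c1_def by (rule integral_nonneg_AE) (simp add: Gnn)
    have c2_nn: "0 \<le> c2 x" for x unfolding c2_def by (rule integral_nonneg_AE) (simp add: Gnn)
    have c1_le: "c1 x \<le> A1" for x unfolding c1_def
      by (rule order.trans[OF integral_mono[OF integrable_real_mult_indicator[OF Oc_m Gint1] Gint1] h1[of x]])
         (auto simp: Gnn indicator_def)
    have c2_le: "c2 x \<le> K1" for x unfolding c2_def
      by (rule order.trans[OF integral_mono[OF integrable_real_mult_indicator[OF Oc_m Gint2] Gint2] h2[of x]])
         (auto simp: Gnn indicator_def)
    have c1_m[measurable]: "c1 \<in> borel_measurable M" unfolding c1_def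
      by (rule sigma_finite_measure.borel_measurable_lebesgue_integral[OF sfin]) measurable
    have c2_m[measurable]: "c2 \<in> borel_measurable M" unfolding c2_def
      by (rule sigma_finite_measure.borel_measurable_lebesgue_integral[OF sfin]) measurable
    have hc: "2 * K2 \<le> c1 x + c2 x" if "x \<in> Os" for x
    proof -
      have "(\<integral>y. indicator Oc y * (G x y + G y x) \<partial>M) = (\<integral>y. G x y * indicator Oc y + G y x * indicator Oc y \<partial>M)"
        by (rule Bochner_Integration.integral_cong) (auto simp: algebra_simps)
      also have "\<dots> = c1 x + c2 x" unfolding c1_def c2_def
        by (rule Bochner_Integration.integral_add) (auto intro: integrable_real_mult_indicator Gint1 Gint2)
      finally show ?thesis using h3[OF that] by simp
    qed
    define H1 where "H1 = (\<lambda>(x,y). indicator Os x * (u x)^2 * (G x y * indicator Oc y))"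
    define H2 where "H2 = (\<lambda>(x,y). indicator Os y * (u y)^2 * (G x y * indicator Oc x))"
    have H1m[measurable]: "H1 \<in> borel_measurable (M \<Otimes>\<^sub>M M)" unfolding H1_def by measurable
    have H2m[measurable]: "H2 \<in> borel_measurable (M \<Otimes>\<^sub>M M)" unfolding H2_def by measurable
    have iH1: "integrable (M \<Otimes>\<^sub>M M) H1"
      by (rule Bochner_Integration.integrable_bound[OF ix H1m])
         (auto intro!: AE_I2 simp: H1_def indicator_def Gnn abs_mult)
    have iH2: "integrable (M \<Otimes>\<^sub>M M) H2"
      by (rule Bochner_Integration.integrable_bound[OF iy H2m])
         (auto intro!: AE_I2 simp: H2_def indicator_def Gnn abs_mult)
    have iD: "integrable (M \<Otimes>\<^sub>M M) (\<lambda>(x,y). (u x - u y)^2 * G x y)"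
    proof -
      have eqf: "(\<lambda>(x,y). (u x - u y)^2 * G x y) = (\<lambda>p. ((\<lambda>(x,y). (u x)^2 * G x y) p + (\<lambda>(x,y). (u y)^2 * G x y) p)
               - 2 * (\<lambda>(x,y). u x * u y * G x y) p)"
        by (auto simp: fun_eq_iff power2_eq_square algebra_simps)
      show ?thesis unfolding eqf using ix iy ixy by simp
    qed
    have H1_eq: "integral\<^sup>L (M \<Otimes>\<^sub>M M) H1 = (\<integral>x. indicator Os x * (u x)^2 * c1 x \<partial>M)"
      using P.integral_fst[of "\<lambda>x y. indicator Os x * (u x)^2 * (G x y * indicator Oc y)"] iH1
      by (simp add: H1_def c1_def)
    have H2_eq: "integral\<^sup>L (M \<Otimes>\<^sub>M M) H2 = (\<integral>y. indicator Os y * (u y)^2 * c2 y \<partial>M)"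
      using P.integral_snd[of "\<lambda>x y. indicator Os y * (u y)^2 * (G x y * indicator Oc x)"] iH2
      by (simp add: H2_def c2_def)
    have ic1: "integrable M (\<lambda>x. indicator Os x * (u x)^2 * c1 x)"
      by (rule Bochner_Integration.integrable_bound[of _ "\<lambda>x. A1 * (u x)^2"])
         (use iu c1_nn c1_le A1pos in \<open>auto intro!: AE_I2 mult_right_mono simp: abs_mult mult.commute indicator_def\<close>)
    have ic2: "integrable M (\<lambda>x. indicator Os x * (u x)^2 * c2 x)"
      by (rule Bochner_Integration.integrable_bound[of _ "\<lambda>x. K1 * (u x)^2"])
         (use iu c2_nn c2_le K1_nn in \<open>auto intro!: AE_I2 mult_right_mono simp: abs_mult mult.commute indicator_def\<close>)
    have "2 * K2 * (\<integral>x. (u x)^2 \<partial>M) = (\<integral>x. 2 * K2 * (u x)^2 \<partial>M)" by simp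
    also have "\<dots> \<le> (\<integral>x. indicator Os x * (u x)^2 * c1 x + indicator Os x * (u x)^2 * c2 x \<partial>M)"
    proof (rule integral_mono)
      show "integrable M (\<lambda>x. 2 * K2 * (u x)^2)" using iu by simp
      show "integrable M (\<lambda>x. indicator Os x * (u x)^2 * c1 x + indicator Os x * (u x)^2 * c2 x)"
        using ic1 ic2 by simp
      fix x show "2 * K2 * (u x)^2 \<le> indicator Os x * (u x)^2 * c1 x + indicator Os x * (u x)^2 * c2 x"
      proof (cases "x \<in> Os")
        case True
        have "2 * K2 * (u x)^2 \<le> (c1 x + c2 x) * (u x)^2" by (rule mult_right_mono[OF hc[OF True]]) simp
        then show ?thesis using True by (simp add: algebra_simps)
      next
        case False then show ?thesis using V_zero[OF uV False] by simp
      qed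
    qed
    also have "\<dots> = integral\<^sup>L (M \<Otimes>\<^sub>M M) H1 + integral\<^sup>L (M \<Otimes>\<^sub>M M) H2"
      using ic1 ic2 H1_eq H2_eq by simp
    also have "\<dots> = integral\<^sup>L (M \<Otimes>\<^sub>M M) (\<lambda>p. H1 p + H2 p)" using iH1 iH2 by simp
    also have "\<dots> \<le> D" unfolding D_def
    proof (rule integral_mono)
      show "integrable (M \<Otimes>\<^sub>M M) (\<lambda>p. H1 p + H2 p)" using iH1 iH2 by simp
      show "integrable (M \<Otimes>\<^sub>M M) (\<lambda>(x,y). (u x - u y)^2 * G x y)" by (fact iD)
      fix p :: "'a \<times> 'a"
      obtain x y where p: "p = (x,y)" by fastforce
      have "H1 (x,y) + H2 (x,y) \<le> (u x - u y)^2 * G x y"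
      proof (cases "x \<in> Os")
        case True
        then have "x \<notin> Oc" using disj by auto
        show ?thesis
        proof (cases "y \<in> Oc")
          case True
          then have "y \<notin> Os" using disj by auto
          then show ?thesis using \<open>x \<notin> Oc\<close> True \<open>x \<in> Os\<close> V_zero[OF uV \<open>y \<notin> Os\<close>]
            by (simp add: H1_def H2_def)
        next
          case False
          then show ?thesis using \<open>x \<notin> Oc\<close> by (simp add: H1_def H2_def Gnn)
        qed
      next
        case False
        then have ux: "u x = 0" by (rule V_zero[OF uV])
        show ?thesis
        proof (cases "x \<in> Oc \<and> y \<in> Os")
          case True then show ?thesis using False ux by (simp add: H1_def H2_def)
        next
          case False then show ?thesis using \<open>x \<notin> Os\<close> by (auto simp: H1_def H2_def Gnn)
        qed
      qed
      then show "H1 p + H2 p \<le> (case p of (x,y) \<Rightarrow> (u x - u y)^2 * G x y)" by (simp add: p)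
    qed
    finally show ?thesis .
  qed
  have "(\<integral>x. u x * Sop u x \<partial>M) = (\<integral>x. (u x)^2 * a x - u x * Kop u x \<partial>M)"
    by (rule Bochner_Integration.integral_cong) (auto simp: Sop_def power2_eq_square algebra_simps)
  also have "\<dots> = P - X" using ia iK by (simp add: P_def X_def)
  finally have "(\<integral>x. u x * Sop u x \<partial>M) = P - X" .
  then show ?thesis using D_eq QP DK by linarith
qed


end

context nl begin

lemma contr:
  assumes dV: "d \<in> V"
  shows "(\<lambda>x. indicator Os x * (d x - om * Sop d x)) \<in> V"
    and "(\<integral>x. (indicator Os x * (d x - om * Sop d x))^2 \<partial>M) \<le> Qc * (\<integral>x. (d x)^2 \<partial>M)"
proof -
  have d: "d \<in> L2s" using dV by (rule V_L2s)
  have [measurable]: "d \<in> borel_measurable M" using d by (simp add: L2s_def)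
  have SL: "Sop d \<in> L2s" by (rule Sop_L2(1)[OF d])
  have id: "integrable M (\<lambda>x. (d x)^2)" using L2s_i[OF d] .
  have iS: "integrable M (\<lambda>x. (Sop d x)^2)" using L2s_i[OF SL] .
  have idS: "integrable M (\<lambda>x. d x * Sop d x)"
    by (rule L2_prod_integrable) (use id iS in auto)
  have eL: "(\<lambda>x. d x - om * Sop d x) \<in> L2s" by (rule L2s_diff[OF d L2s_cmult[OF SL]])
  show "(\<lambda>x. indicator Os x * (d x - om * Sop d x)) \<in> V"
    by (rule VI[OF L2s_ind[OF eL]]) simp
  have ie: "integrable M (\<lambda>x. (d x - om * Sop d x)^2)" using L2s_i[OF eL] .
  have ie': "integrable M (\<lambda>x. (indicator Os x * (d x - om * Sop d x))^2)" using L2s_i[OF L2s_ind[OF eL]] .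
  have "(\<integral>x. (indicator Os x * (d x - om * Sop d x))^2 \<partial>M) \<le> (\<integral>x. (d x - om * Sop d x)^2 \<partial>M)"
    by (rule integral_mono[OF ie' ie]) (auto simp: indicator_def)
  also have "\<dots> = (\<integral>x. (d x)^2 - 2 * om * (d x * Sop d x) + om^2 * (Sop d x)^2 \<partial>M)"
    by (rule Bochner_Integration.integral_cong) (auto simp: power2_eq_square algebra_simps)
  also have "\<dots> = (\<integral>x. (d x)^2 \<partial>M) - 2 * om * (\<integral>x. d x * Sop d x \<partial>M) + om^2 * (\<integral>x. (Sop d x)^2 \<partial>M)"
    using id idS iS by simp
  also have "\<dots> \<le> (\<integral>x. (d x)^2 \<partial>M) - 2 * om * (K2 * (\<integral>x. (d x)^2 \<partial>M)) + om^2 * (Mc * (\<integral>x. (d x)^2 \<partial>M))"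
  proof -
    have "2 * om * (K2 * (\<integral>x. (d x)^2 \<partial>M)) \<le> 2 * om * (\<integral>x. d x * Sop d x \<partial>M)"
      using coerc[OF dV] om_pos by simp
    moreover have "om^2 * (\<integral>x. (Sop d x)^2 \<partial>M) \<le> om^2 * (Mc * (\<integral>x. (d x)^2 \<partial>M))"
      using Sop_L2(2)[OF d] by (simp add: mult_left_mono)
    ultimately show ?thesis by linarith
  qed
  also have "\<dots> = (1 - K2^2 / Mc) * (\<integral>x. (d x)^2 \<partial>M)"
    using Mc_pos by (simp add: om_def field_simps power2_eq_square)
  also have "\<dots> \<le> Qc * (\<integral>x. (d x)^2 \<partial>M)"
    unfolding Qc_def by (rule mult_right_mono) (auto intro: integral_nonneg_AE)
  finally show "(\<integral>x. (indicator Os x * (d x - om * Sop d x))^2 \<partial>M) \<le> Qc * (\<integral>x. (d x)^2 \<partial>M)" .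
qed

primrec it :: "nat \<Rightarrow> 'a \<Rightarrow> real" where
  "it 0 = (\<lambda>x. 0)"
| "it (Suc k) = (\<lambda>x. indicator Os x * (it k x - om * (Sop (it k) x - f x)))"

definition "dd k = (\<lambda>x. it (Suc k) x - it k x)"

lemma it_V: "it k \<in> V"
proof (induction k)
  case 0
  show ?case by (rule VI) (auto intro!: L2sI)
next
  case (Suc k)
  have kL: "it k \<in> L2s" using Suc by (rule V_L2s)
  have "(\<lambda>x. it k x - om * (Sop (it k) x - f x)) \<in> L2s"
    by (rule L2s_diff[OF kL L2s_cmult[OF L2s_diff[OF Sop_L2(1)[OF kL] f_L2s]]])
  then show ?case unfolding it.simps by (rule VI[OF L2s_ind]) simp
qed

lemma it_L2s: "it k \<in> L2s" using it_V by (rule V_L2s)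
lemma it_m[measurable]: "it k \<in> borel_measurable M" using it_L2s by (rule L2s_m)

lemma dd_V: "dd k \<in> V" unfolding dd_def by (rule V_diff[OF it_V it_V])
lemma dd_L2s: "dd k \<in> L2s" using dd_V by (rule V_L2s)
lemma dd_m[measurable]: "dd k \<in> borel_measurable M" using dd_L2s by (rule L2s_m)

lemma dd_eq: "dd k x = indicator Os x * (- om * (Sop (it k) x - f x))"
proof (cases "x \<in> Os")
  case True then show ?thesis by (simp add: dd_def)
next
  case False then show ?thesis by (simp add: dd_def V_zero[OF it_V])
qed

lemma dd_rec: "AE x in M. dd (Suc k) x = indicator Os x * (dd k x - om * Sop (dd k) x)"
proof -
  have "AE x in M. Sop (dd k) x = Sop (it (Suc k)) x - Sop (it k) x"
    unfolding dd_def by (rule Sop_diff_AE[OF it_L2s it_L2s])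
  then show ?thesis
  proof eventually_elim
    case (elim x)
    show ?case unfolding dd_eq[of "Suc k"] dd_eq[of k] elim
      by (simp add: indicator_def algebra_simps)
  qed
qed

lemma dd_norm: "(\<integral>x. (dd k x)^2 \<partial>M) \<le> Qc^k * (\<integral>x. (dd 0 x)^2 \<partial>M)"
proof (induction k)
  case 0 then show ?case by simp
next
  case (Suc k)
  have "(\<integral>x. (dd (Suc k) x)^2 \<partial>M) = (\<integral>x. (indicator Os x * (dd k x - om * Sop (dd k) x))^2 \<partial>M)"
    by (rule integral_cong_AE) (use dd_rec[of k] in \<open>auto elim!: eventually_mono\<close>)
  also have "\<dots> \<le> Qc * (\<integral>x. (dd k x)^2 \<partial>M)" by (rule contr(2)[OF dd_V])
  also have "\<dots> \<le> Qc * (Qc^k * (\<integral>x. (dd 0 x)^2 \<partial>M))" by (rule mult_left_mono[OF Suc Qc_nn])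
  finally show ?case by simp
qed


definition "rho = (1 + Qc) / 2"
definition "C0 = (\<integral>x. (dd 0 x)^2 \<partial>M)"
definition "W x = (\<Sum>j. ennreal ((dd j x)^2 / rho^j))"
definition "Fin = {x \<in> space M. W x \<noteq> top}"
definition "Wr x = enn2real (W x)"
definition "rr = sqrt rho"
definition "ddm j x = indicator Fin x * dd j x"
definition "uu x = (\<Sum>j. ddm j x)"

lemma rho_pos: "0 < rho" unfolding rho_def using Qc_nn by simp
lemma rho_lt1: "rho < 1" unfolding rho_def using Qc_lt1 by simp
lemma Qc_lt_rho: "Qc < rho" unfolding rho_def using Qc_lt1 by simp
lemma rr_nn: "0 \<le> rr" unfolding rr_def using rho_pos by simp
lemma rr_lt1: "rr < 1" unfolding rr_def using rho_lt1 rho_pos by simp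
lemma rr_sq: "rr^2 = rho" unfolding rr_def using rho_pos by simp
lemma C0_nn: "0 \<le> C0" unfolding C0_def by (rule integral_nonneg_AE) simp

lemma W_m[measurable]: "W \<in> borel_measurable M" unfolding W_def by measurable
lemma Fin_m[measurable]: "Fin \<in> sets M" unfolding Fin_def by measurable
lemma Wr_m[measurable]: "Wr \<in> borel_measurable M" unfolding Wr_def by measurable
lemma ddm_m[measurable]: "ddm j \<in> borel_measurable M" unfolding ddm_def by measurable
lemma uu_m[measurable]: "uu \<in> borel_measurable M" unfolding uu_def by measurable

lemma W_int: "(\<integral>\<^sup>+x. W x \<partial>M) < \<infinity>"
proof -
  have le_j: "(\<integral>\<^sup>+x. ennreal ((dd j x)^2 / rho^j) \<partial>M) \<le> ennreal ((Qc/rho)^j * C0)" for j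
  proof -
    have i: "integrable M (\<lambda>x. (dd j x)^2 / rho^j)" using L2s_i[OF dd_L2s[of j]] by simp
    have "(\<integral>\<^sup>+x. ennreal ((dd j x)^2 / rho^j) \<partial>M) = ennreal (\<integral>x. (dd j x)^2 / rho^j \<partial>M)"
      using rho_pos by (intro nn_integral_eq_integral[OF i] AE_I2) simp
    also have "(\<integral>x. (dd j x)^2 / rho^j \<partial>M) = (\<integral>x. (dd j x)^2 \<partial>M) / rho^j" by simp
    also have "\<dots> \<le> Qc^j * C0 / rho^j"
      using dd_norm[of j] rho_pos by (simp add: C0_def divide_right_mono)
    also have "\<dots> = (Qc/rho)^j * C0" by (simp add: power_divide)
    finally show ?thesis by (simp add: ennreal_leI)
  qed
  have sm: "summable (\<lambda>j. (Qc/rho)^j * C0)"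
    by (rule summable_mult2, rule summable_geometric) (use Qc_nn rho_pos Qc_lt_rho in simp)
  have "(\<integral>\<^sup>+x. W x \<partial>M) = (\<Sum>j. \<integral>\<^sup>+x. ennreal ((dd j x)^2 / rho^j) \<partial>M)"
    unfolding W_def by (rule nn_integral_suminf) measurable
  also have "\<dots> \<le> (\<Sum>j. ennreal ((Qc/rho)^j * C0))"
    by (rule suminf_le[OF le_j summableI summableI])
  also have "\<dots> = ennreal (\<Sum>j. (Qc/rho)^j * C0)"
    by (rule suminf_ennreal2[OF _ sm]) (use Qc_nn rho_pos C0_nn in simp)
  also have "\<dots> < \<infinity>" by simp
  finally show ?thesis .
qed

lemma AE_Fin: "AE x in M. x \<in> Fin"
proof -
  have "AE x in M. W x \<noteq> \<infinity>" by (rule nn_integral_PInf_AE) (use W_int in auto)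
  then show ?thesis by (auto simp: Fin_def elim!: eventually_mono)
qed

lemma Wr_nn: "0 \<le> Wr x" unfolding Wr_def by simp

lemma Wr_int: "integrable M Wr"
proof (rule integrableI_bounded)
  show "Wr \<in> borel_measurable M" by measurable
  have "(\<integral>\<^sup>+x. ennreal (norm (Wr x)) \<partial>M) \<le> (\<integral>\<^sup>+x. W x \<partial>M)"
    by (rule nn_integral_mono) (auto simp: Wr_def ennreal_enn2real_if)
  then show "(\<integral>\<^sup>+x. ennreal (norm (Wr x)) \<partial>M) < \<infinity>" using W_int by simp
qed

lemma dd_bound_Fin:
  assumes x: "x \<in> Fin"
  shows "(dd j x)^2 \<le> Wr x * rho^j"
proof -
  have nt: "(\<Sum>j. ennreal ((dd j x)^2 / rho^j)) \<noteq> top" using x by (simp add: Fin_def W_def)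
  have nn: "\<And>j. 0 \<le> (dd j x)^2 / rho^j" using rho_pos by simp
  have sm: "summable (\<lambda>j. (dd j x)^2 / rho^j)" by (rule summable_suminf_not_top[OF nn nt])
  have s0: "0 \<le> (\<Sum>j. (dd j x)^2 / rho^j)" by (rule suminf_nonneg[OF sm nn])
  have "Wr x = (\<Sum>j. (dd j x)^2 / rho^j)"
    unfolding Wr_def W_def using suminf_ennreal2[OF nn sm] s0 by simp
  moreover have "(\<Sum>j\<in>{j}. (dd j x)^2 / rho^j) \<le> (\<Sum>j. (dd j x)^2 / rho^j)"
    by (rule sum_le_suminf[OF sm]) (use nn in auto)
  ultimately have "(dd j x)^2 / rho^j \<le> Wr x" by simp
  then show ?thesis using rho_pos by (simp add: divide_le_eq)
qed

lemma ddm_bound: "\<bar>ddm j x\<bar> \<le> sqrt (Wr x) * rr^j"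
proof (cases "x \<in> Fin")
  case True
  have "\<bar>dd j x\<bar> = sqrt ((dd j x)^2)" by simp
  also have "\<dots> \<le> sqrt (Wr x * rho^j)" by (rule real_sqrt_le_mono[OF dd_bound_Fin[OF True]])
  also have "\<dots> = sqrt (Wr x) * rr^j" by (simp add: real_sqrt_mult rr_def real_sqrt_power)
  finally show ?thesis using True by (simp add: ddm_def)
next
  case False then show ?thesis by (simp add: ddm_def rr_nn Wr_nn)
qed

lemma geo_summable: "summable (\<lambda>j. c * rr^j)"
  by (rule summable_mult, rule summable_geometric) (use rr_nn rr_lt1 in simp)

lemma ddm_summable: "summable (\<lambda>j. ddm j x)"
  by (rule summable_comparison_test[OF _ geo_summable[of "sqrt (Wr x)"]]) (use ddm_bound in auto)

lemma ddm_partial: "(\<Sum>j<k. ddm j x) = indicator Fin x * it k x"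
proof -
  have "(\<Sum>j<k. ddm j x) = indicator Fin x * (\<Sum>j<k. it (Suc j) x - it j x)"
    by (simp add: ddm_def dd_def sum_distrib_left)
  also have "(\<Sum>j<k. it (Suc j) x - it j x) = it k x - it 0 x" by (rule sum_lessThan_telescope)
  finally show ?thesis by simp
qed

lemma tail_bound: "(uu x - indicator Fin x * it k x)^2 \<le> Wr x * rho^k / (1 - rr)^2"
proof -
  have sm: "summable (\<lambda>j. ddm j x)" by (rule ddm_summable)
  have "uu x = (\<Sum>j. ddm (j + k) x) + (\<Sum>j<k. ddm j x)"
    unfolding uu_def by (rule suminf_split_initial_segment[OF sm])
  then have eq: "uu x - indicator Fin x * it k x = (\<Sum>j. ddm (j + k) x)" by (simp add: ddm_partial)
  have g: "summable (\<lambda>j. (sqrt (Wr x) * rr^k) * rr^j)" by (rule geo_summable)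
  have "norm (\<Sum>j. ddm (j + k) x) \<le> (\<Sum>j. (sqrt (Wr x) * rr^k) * rr^j)"
  proof (rule norm_suminf_le[OF _ g])
    fix j show "norm (ddm (j + k) x) \<le> sqrt (Wr x) * rr^k * rr^j"
      using ddm_bound[of "j+k" x] by (simp add: power_add mult_ac)
  qed
  also have "\<dots> = sqrt (Wr x) * rr^k / (1 - rr)"
    using suminf_mult[OF summable_geometric[of rr], of "sqrt (Wr x) * rr^k"] suminf_geometric[of rr]
      rr_nn rr_lt1 by simp
  finally have ab: "\<bar>uu x - indicator Fin x * it k x\<bar> \<le> sqrt (Wr x) * rr^k / (1 - rr)" using eq by simp
  have "(uu x - indicator Fin x * it k x)^2 = \<bar>uu x - indicator Fin x * it k x\<bar>^2" by simp
  also have "\<dots> \<le> (sqrt (Wr x) * rr^k / (1 - rr))^2" by (rule power_mono[OF ab]) simp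
  also have "\<dots> = Wr x * rho^k / (1 - rr)^2"
  proof -
    have e1: "(rr^k)^2 = rho^k" unfolding rr_sq[symmetric] by (metis power_mult mult.commute)
    have e2: "(sqrt (Wr x))^2 = Wr x" using Wr_nn[of x] by simp
    show ?thesis by (simp only: power_divide power_mult_distrib e1 e2)
  qed
  finally show ?thesis .
qed

definition "CW = (\<integral>x. Wr x \<partial>M) / (1 - rr)^2"

lemma uu_V: "uu \<in> V"
proof (rule VI)
  show "uu \<in> L2s"
  proof (rule L2sI)
    show "uu \<in> borel_measurable M" by measurable
    show "integrable M (\<lambda>x. (uu x)^2)"
    proof (rule Bochner_Integration.integrable_bound[of _ "\<lambda>x. Wr x / (1 - rr)^2"])
      show "integrable M (\<lambda>x. Wr x / (1 - rr)^2)" using Wr_int by simp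
      show "(\<lambda>x. (uu x)^2) \<in> borel_measurable M" by measurable
      show "AE x in M. norm ((uu x)^2) \<le> norm (Wr x / (1 - rr)^2)"
        using tail_bound[of _ 0] Wr_nn by (auto intro!: AE_I2)
    qed
  qed
  fix x assume "x \<notin> Os"
  then have "\<And>j. ddm j x = 0" by (simp add: ddm_def V_zero[OF dd_V])
  then show "uu x = 0" by (simp add: uu_def)
qed

lemma uu_L2s: "uu \<in> L2s" using uu_V by (rule V_L2s)

lemma e_norm: "(\<integral>x. (uu x - it k x)^2 \<partial>M) \<le> rho^k * CW"
proof -
  have i: "integrable M (\<lambda>x. (uu x - it k x)^2)" using L2s_i[OF L2s_diff[OF uu_L2s it_L2s]] .
  have "(\<integral>x. (uu x - it k x)^2 \<partial>M) \<le> (\<integral>x. Wr x * rho^k / (1 - rr)^2 \<partial>M)"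
  proof (rule integral_mono_AE[OF i])
    show "integrable M (\<lambda>x. Wr x * rho^k / (1 - rr)^2)" using Wr_int by simp
    show "AE x in M. (uu x - it k x)^2 \<le> Wr x * rho^k / (1 - rr)^2"
      using AE_Fin
    proof eventually_elim
      case (elim x)
      then show ?case using tail_bound[of x k] by (simp add: indicator_def)
    qed
  qed
  also have "\<dots> = rho^k * CW" by (simp add: CW_def)
  finally show ?thesis .
qed

lemma lim_le0:
  fixes Z al be :: real
  assumes "\<And>k. Z \<le> al * rho^k + be * Qc^k"
  shows "Z \<le> 0"
proof -
  have "(\<lambda>k. al * rho^k + be * Qc^k) \<longlonglongrightarrow> al * 0 + be * 0"
    by (intro tendsto_intros LIMSEQ_power_zero) (use rho_pos rho_lt1 Qc_nn Qc_lt1 in auto)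
  then have "(\<lambda>k. al * rho^k + be * Qc^k) \<longlonglongrightarrow> 0" by simp
  then show ?thesis by (rule LIMSEQ_le_const) (use assms in auto)
qed

lemma uu_eq: "AE x in M. x \<in> Os \<longrightarrow> Sop uu x = f x"
proof -
  define Z where "Z = (\<integral>x. (indicator Os x * (Sop uu x - f x))^2 \<partial>M)"
  have iZ: "integrable M (\<lambda>x. (indicator Os x * (Sop uu x - f x))^2)"
    using L2s_i[OF L2s_ind[OF L2s_diff[OF Sop_L2(1)[OF uu_L2s] f_L2s]]] .
  have bnd: "Z \<le> (2 * Mc * CW) * rho^k + (2 * C0 / om^2) * Qc^k" for k
  proof -
    define e where "e = (\<lambda>x. uu x - it k x)"
    have eL: "e \<in> L2s" unfolding e_def by (rule L2s_diff[OF uu_L2s it_L2s])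
    have iSe: "integrable M (\<lambda>x. (Sop e x)^2)" using L2s_i[OF Sop_L2(1)[OF eL]] .
    have idd: "integrable M (\<lambda>x. (dd k x)^2)" using L2s_i[OF dd_L2s] .
    have ae: "AE x in M. (indicator Os x * (Sop uu x - f x))^2 \<le> 2 * (Sop e x)^2 + 2 / om^2 * (dd k x)^2"
      using Sop_diff_AE[OF uu_L2s it_L2s, of k]
    proof eventually_elim
      case (elim x)
      have S: "Sop e x = Sop uu x - Sop (it k) x" using elim by (simp add: e_def)
      have dk: "dd k x / om = - (indicator Os x * (Sop (it k) x - f x))"
        using om_pos by (simp add: dd_eq[of k x])
      have "indicator Os x * (Sop uu x - f x) = indicator Os x * Sop e x + (- (dd k x / om))"
        unfolding S dk by (simp add: algebra_simps)
      then have "(indicator Os x * (Sop uu x - f x))^2 \<le> 2 * (indicator Os x * Sop e x)^2 + 2 * (dd k x / om)^2"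
        using sq_add_le[of "indicator Os x * Sop e x" "- (dd k x / om)"] by simp
      also have "\<dots> \<le> 2 * (Sop e x)^2 + 2 / om^2 * (dd k x)^2"
        by (auto simp: indicator_def power_divide)
      finally show ?case .
    qed
    have "Z \<le> (\<integral>x. 2 * (Sop e x)^2 + 2 / om^2 * (dd k x)^2 \<partial>M)"
      unfolding Z_def by (rule integral_mono_AE[OF iZ _ ae]) (use iSe idd in simp)
    also have "\<dots> = 2 * (\<integral>x. (Sop e x)^2 \<partial>M) + 2 / om^2 * (\<integral>x. (dd k x)^2 \<partial>M)"
      using iSe idd by simp
    also have "\<dots> \<le> 2 * (Mc * (rho^k * CW)) + 2 / om^2 * (Qc^k * C0)"
    proof -
      have "(\<integral>x. (Sop e x)^2 \<partial>M) \<le> Mc * (\<integral>x. (e x)^2 \<partial>M)" by (rule Sop_L2(2)[OF eL])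
      also have "\<dots> \<le> Mc * (rho^k * CW)" using e_norm[of k] Mc_pos by (simp add: e_def)
      finally have 1: "(\<integral>x. (Sop e x)^2 \<partial>M) \<le> Mc * (rho^k * CW)" .
      have 2: "2 / om^2 * (\<integral>x. (dd k x)^2 \<partial>M) \<le> 2 / om^2 * (Qc^k * C0)"
        unfolding C0_def by (rule mult_left_mono[OF dd_norm[of k]]) simp
      show ?thesis using 1 2 by linarith
    qed
    also have "\<dots> = (2 * Mc * CW) * rho^k + (2 * C0 / om^2) * Qc^k" by (simp add: algebra_simps)
    finally show ?thesis .
  qed
  have "Z \<le> 0" by (rule lim_le0[OF bnd])
  moreover have "0 \<le> Z" unfolding Z_def by (rule integral_nonneg_AE) simp
  ultimately have "Z = 0" by simp
  then have "AE x in M. (indicator Os x * (Sop uu x - f x))^2 = 0"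
    unfolding Z_def by (subst integral_nonneg_eq_0_iff_AE[symmetric]) (use iZ in auto)
  then show ?thesis by eventually_elim (auto simp: indicator_def)
qed

lemma zero_unique:
  assumes wV: "w \<in> V" and ae: "AE x in M. x \<in> Os \<longrightarrow> Sop w x = 0"
  shows "AE x in M. w x = 0"
proof -
  have w: "w \<in> L2s" using wV by (rule V_L2s)
  have iw: "integrable M (\<lambda>x. (w x)^2)" using L2s_i[OF w] .
  have "(\<integral>x. w x * Sop w x \<partial>M) = (\<integral>x. 0 \<partial>M)"
    by (rule integral_cong_AE) (use ae V_zero[OF wV] w in \<open>auto elim!: eventually_mono\<close>)
  then have "K2 * (\<integral>x. (w x)^2 \<partial>M) \<le> 0" using coerc[OF wV] by simp
  moreover have "0 \<le> (\<integral>x. (w x)^2 \<partial>M)" by (rule integral_nonneg_AE) simp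
  ultimately have "(\<integral>x. (w x)^2 \<partial>M) = 0" using K2pos by (simp add: mult_le_0_iff)
  then have "AE x in M. (w x)^2 = 0"
    by (subst integral_nonneg_eq_0_iff_AE[symmetric]) (use iw in auto)
  then show ?thesis by eventually_elim simp
qed

theorem abs_main:
  "\<exists>u\<in>V. (AE x in M. x \<in> Os \<longrightarrow> Sop u x = f x)
      \<and> K2^2 * (\<integral>x. (u x)^2 \<partial>M) \<le> (\<integral>x. (indicator Os x * f x)^2 \<partial>M)
      \<and> (\<forall>w\<in>V. (AE x in M. x \<in> Os \<longrightarrow> Sop w x = f x) \<longrightarrow> (AE x in M. w x = u x))"
proof (intro bexI conjI ballI impI)
  show "uu \<in> V" by (rule uu_V)
  show "AE x in M. x \<in> Os \<longrightarrow> Sop uu x = f x" by (rule uu_eq)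
  fix w assume wV: "w \<in> V" and ae: "AE x in M. x \<in> Os \<longrightarrow> Sop w x = f x"
  have "AE x in M. (\<lambda>x. w x - uu x) x = 0"
  proof (rule zero_unique[OF V_diff[OF wV uu_V]])
    show "AE x in M. x \<in> Os \<longrightarrow> Sop (\<lambda>x. w x - uu x) x = 0"
      using Sop_diff_AE[OF V_L2s[OF wV] uu_L2s] ae uu_eq by eventually_elim auto
  qed
  then show "AE x in M. w x = uu x" by eventually_elim simp
next
  have u: "uu \<in> L2s" by (rule uu_L2s)
  define g where "g x = indicator Os x * f x" for x
  have gL: "g \<in> L2s" unfolding g_def by (rule L2s_ind[OF f_L2s])
  have "(\<integral>x. uu x * Sop uu x \<partial>M) = (\<integral>x. uu x * g x \<partial>M)"
    by (rule integral_cong_AE) (use uu_eq V_zero[OF uu_V] u gL in \<open>auto simp: g_def indicator_def elim!: eventually_mono\<close>)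
  also have "\<dots> \<le> sqrt ((\<integral>x. uu x * g x \<partial>M)^2)" by simp
  finally have A: "(\<integral>x. uu x * Sop uu x \<partial>M) \<le> sqrt ((\<integral>x. uu x * g x \<partial>M)^2)" .
  have CS: "(\<integral>x. uu x * g x \<partial>M)^2 \<le> (\<integral>x. (uu x)^2 \<partial>M) * (\<integral>x. (g x)^2 \<partial>M)"
    by (rule L2_CS) (use u gL L2s_i in auto)
  define U where "U = (\<integral>x. (uu x)^2 \<partial>M)"
  define F where "F = (\<integral>x. (g x)^2 \<partial>M)"
  have U0: "0 \<le> U" unfolding U_def by (rule integral_nonneg_AE) simp
  have F0: "0 \<le> F" unfolding F_def by (rule integral_nonneg_AE) simp
  have "K2 * U \<le> sqrt (U * F)"
    using coerc[OF uu_V] A CS real_sqrt_le_mono[OF CS] unfolding U_def F_def by linarith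
  moreover have "0 \<le> K2 * U" using K2pos U0 by simp
  ultimately have "(K2 * U)^2 \<le> (sqrt (U * F))^2" by (rule power_mono)
  then have "(K2 * U)^2 \<le> U * F" using U0 F0 by simp
  then have "U * (K2^2 * U) \<le> U * F" by (simp add: power2_eq_square mult_ac)
  then have "K2^2 * U \<le> F"
  proof (cases "U = 0")
    case True then show ?thesis using F0 by simp
  next
    case False then show ?thesis using U0 \<open>U * (K2^2 * U) \<le> U * F\<close> by (simp add: mult_le_cancel_left)
  qed
  then show "K2^2 * (\<integral>x. (uu x)^2 \<partial>M) \<le> (\<integral>x. (indicator Os x * f x)^2 \<partial>M)"
    unfolding U_def F_def g_def .
qed

end


lemma matrix_inv_props:
  fixes M :: "real^'n^'n"
  assumes "invertible M"
  shows "M ** matrix_inv M = mat 1" "matrix_inv M ** M = mat 1"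
  using someI_ex[OF assms[unfolded invertible_def]] unfolding matrix_inv_def by auto

lemma continuous_on_det:
  fixes F :: "'a::topological_space \<Rightarrow> real^'n^'n"
  assumes "\<And>i j. continuous_on S (\<lambda>t. F t $ i $ j)"
  shows "continuous_on S (\<lambda>t. det (F t))"
  unfolding det_def by (intro continuous_intros assms)

lemma det_ker:
  fixes N :: "real^'n^'n"
  assumes "det N = 0"
  obtains \<xi> where "\<xi> \<noteq> 0" "N *v \<xi> = 0"
proof -
  have "\<not> invertible N" using assms by (simp add: invertible_det_nz)
  then have "\<not> (\<forall>x. N *v x = 0 \<longrightarrow> x = 0)"
    unfolding invertible_left_inverse matrix_left_invertible_ker .
  then show ?thesis using that by blast
qed

lemma det_pos_pd:
  fixes M :: "real^'n^'n"
  assumes pd: "\<And>\<xi>. \<xi> \<noteq> 0 \<Longrightarrow> 0 < \<xi> \<bullet> (M *v \<xi>)"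
  shows "0 < det M"
proof -
  define N where "N t = t *\<^sub>R M + (1 - t) *\<^sub>R mat 1" for t :: real
  have Nv: "N t *v \<xi> = t *\<^sub>R (M *v \<xi>) + (1 - t) *\<^sub>R \<xi>" for t \<xi>
    by (simp add: N_def matrix_vector_mult_add_rdistrib scaleR_matrix_vector_assoc[symmetric])
  have nz: "det (N t) \<noteq> 0" if t: "0 \<le> t" "t \<le> 1" for t
  proof
    assume "det (N t) = 0"
    then obtain \<xi> where \<xi>: "\<xi> \<noteq> 0" "N t *v \<xi> = 0" by (rule det_ker)
    have "\<xi> \<bullet> (N t *v \<xi>) = t * (\<xi> \<bullet> (M *v \<xi>)) + (1 - t) * (\<xi> \<bullet> \<xi>)"
      by (simp add: Nv inner_add_right)
    moreover have "0 < t * (\<xi> \<bullet> (M *v \<xi>)) + (1 - t) * (\<xi> \<bullet> \<xi>)"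
    proof (cases "t = 0")
      case True then show ?thesis using \<xi>(1) by simp
    next
      case False
      then have "0 < t * (\<xi> \<bullet> (M *v \<xi>))" using t pd[OF \<xi>(1)] by simp
      moreover have "0 \<le> (1 - t) * (\<xi> \<bullet> \<xi>)" using t by simp
      ultimately show ?thesis by linarith
    qed
    ultimately show False using \<xi>(2) by simp
  qed
  have cont: "continuous_on {0..1} (\<lambda>t. det (N t))"
    by (rule continuous_on_det) (simp add: N_def, intro continuous_intros)
  have N0: "det (N 0) = 1" by (simp add: N_def)
  have N1: "N 1 = M" by (simp add: N_def)
  show ?thesis
  proof (rule ccontr)
    assume "\<not> 0 < det M"
    then have "det (N 1) \<le> 0" using N1 by simp
    then obtain t where "0 \<le> t" "t \<le> 1" "det (N t) = 0"
      using IVT2'[of "\<lambda>t. det (N t)" 1 0 0, OF _ _ _ cont] N0 by auto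
    then show False using nz by blast
  qed
qed

locale geo =
  fixes A :: "real^'n \<Rightarrow> real^'n^'n" and lam :: real
  assumes ell: "\<And>x \<xi>. lam * (norm \<xi>)^2 \<le> \<xi> \<bullet> (A x *v \<xi>)" and lam: "0 < lam"
    and contA: "\<And>i j. continuous_on UNIV (\<lambda>x. A x $ i $ j)"
begin

lemma pd: assumes "\<xi> \<noteq> 0" shows "0 < \<xi> \<bullet> (A x *v \<xi>)"
proof -
  have "0 < (norm \<xi>)^2" using assms by simp
  then have "0 < lam * (norm \<xi>)^2" using lam by simp
  then show ?thesis using ell[where x=x and \<xi>=\<xi>] by (rule less_le_trans)
qed

lemma detA_pos: "0 < det (A x)" by (rule det_pos_pd[OF pd])

lemma detdA_pos: assumes "c > 0" shows "0 < det (c *\<^sub>R A x)"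
proof (rule det_pos_pd)
  fix \<xi> :: "real^'n" assume "\<xi> \<noteq> 0"
  then show "0 < \<xi> \<bullet> ((c *\<^sub>R A x) *v \<xi>)"
    using pd[of \<xi> x] assms by (simp add: scaleR_matrix_vector_assoc[symmetric])
qed

lemma invA: "invertible (A x)" using detA_pos[of x] by (simp add: invertible_det_nz)

lemma Ainv: "A x *v (matrix_inv (A x) *v w) = w"
  by (simp add: matrix_vector_mul_assoc matrix_inv_props[OF invA])

lemma cramer_inv:
  "matrix_inv (A x) *v w = (\<chi> k. det (\<chi> i j. if j = k then w$i else A x$i$j) / det (A x))"
  using cramer[of "A x" "matrix_inv (A x) *v w" w] detA_pos[of x] Ainv by simp

lemma q_lower:
  "lam * (norm (matrix_inv (A x) *v (y - x)))^2 \<le> qform A x y"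
proof -
  define z where "z = matrix_inv (A x) *v (y - x)"
  have "y - x = A x *v z" unfolding z_def by (simp add: Ainv)
  then have "qform A x y = (A x *v z) \<bullet> z" by (simp add: qform_def z_def)
  also have "\<dots> = z \<bullet> (A x *v z)" by (simp add: inner_commute)
  finally show ?thesis using ell[where x=x and \<xi>=z] by (simp add: z_def)
qed

lemma q_nn: "0 \<le> qform A x y"
  using q_lower[of x y] lam by (smt (verit) mult_nonneg_nonneg zero_le_power2)

lemma cA: "continuous_on UNIV (\<lambda>p::((real^'n) \<times> ('b::topological_space)). A (fst p) $ i $ j)"
  by (rule continuous_on_compose2[OF contA[of i j] continuous_on_fst]) auto

lemma q_cont: "continuous_on UNIV (\<lambda>p::((real^'n) \<times> (real^'n)). qform A (fst p) (snd p))"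
proof -
  have eq: "qform A (fst p) (snd p) = (snd p - fst p) \<bullet> (\<chi> k. det (\<chi> i j. if j = k then (snd p - fst p)$i else A (fst p)$i$j) / det (A (fst p)))" for p
    by (simp add: qform_def cramer_inv)
  have cd: "continuous_on UNIV (\<lambda>p::((real^'n) \<times> (real^'n)). det (\<chi> i j. if j = k then (snd p - fst p)$i else A (fst p)$i$j))" for k
  proof (rule continuous_on_det)
    fix i j
    show "continuous_on UNIV (\<lambda>p::((real^'n) \<times> (real^'n)). (\<chi> i j. if j = k then (snd p - fst p)$i else A (fst p)$i$j) $ i $ j)"
    proof (cases "j = k")
      case True then show ?thesis by (simp, intro continuous_intros)
    next
      case False then show ?thesis using cA[of i j] by simp
    qed
  qed
  have cd0: "continuous_on UNIV (\<lambda>p::((real^'n) \<times> (real^'n)). det (A (fst p)))"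
    by (rule continuous_on_det) (rule cA)
  show ?thesis unfolding eq
    by (intro continuous_intros cd cd0) (use detA_pos in \<open>auto simp: less_imp_neq[symmetric]\<close>)
qed

lemma detd_cont: "continuous_on UNIV (\<lambda>x. det (c *\<^sub>R A x))"
  by (rule continuous_on_det) (simp, intro continuous_intros contA)

lemma gk_cont:
  assumes d: "0 < \<delta>"
  shows "continuous_on UNIV (\<lambda>p::((real^'n) \<times> (real^'n)). gamma_kernel A \<delta> (fst p) (snd p))"
proof -
  have cd: "continuous_on UNIV (\<lambda>p::((real^'n) \<times> (real^'n)). det ((\<delta>^2) *\<^sub>R A (fst p)))"
    by (rule continuous_on_det) (simp, intro continuous_intros cA)
  have pos: "0 < (2 * pi) ^ CARD('n) * det ((\<delta>^2) *\<^sub>R A x)" for x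
    using detdA_pos[of "\<delta>^2" x] d by simp
  have nz: "det ((\<delta>^2) *\<^sub>R A x) \<noteq> 0" for x using detdA_pos[of "\<delta>^2" x] d by simp
  have d0: "\<delta> \<noteq> 0" using d by simp
  show ?thesis unfolding gamma_kernel_def
    by (intro continuous_intros cd q_cont) (use nz d0 in auto)
qed

end


lemma sf_lebesgue: "sigma_finite_measure (lebesgue :: 'a::euclidean_space measure)"
proof
  obtain A :: "'a set set" where A: "countable A" "A \<subseteq> sets lborel" "\<Union>A = space lborel" "\<forall>a\<in>A. emeasure lborel a \<noteq> \<infinity>"
    using lborel.sigma_finite_countable by blast
  show "\<exists>A::'a set set. countable A \<and> A \<subseteq> sets lebesgue \<and> \<Union>A = space lebesgue \<and> (\<forall>a\<in>A. emeasure lebesgue a \<noteq> \<infinity>)"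
    using A by (intro exI[of _ A]) (auto simp: subset_eq)
qed

lemma borel_to_leb_pair:
  fixes h :: "(real^'n) \<times> (real^'n) \<Rightarrow> real"
  assumes h: "h \<in> borel_measurable borel"
  shows "h \<in> borel_measurable (lebesgue \<Otimes>\<^sub>M lebesgue)"
proof -
  have h': "h \<in> borel_measurable (lborel \<Otimes>\<^sub>M lborel)" using h by (simp add: lborel_prod)
  have id: "(\<lambda>x::real^'n. x) \<in> lebesgue \<rightarrow>\<^sub>M lborel"
    by (rule measurable_completion) simp
  have p: "(\<lambda>p::(real^'n) \<times> (real^'n). (fst p, snd p)) \<in> (lebesgue \<Otimes>\<^sub>M lebesgue) \<rightarrow>\<^sub>M (lborel \<Otimes>\<^sub>M lborel)"
    by (intro measurable_Pair measurable_compose[OF measurable_fst id] measurable_compose[OF measurable_snd id])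
  have "(\<lambda>p. h (fst p, snd p)) \<in> borel_measurable (lebesgue \<Otimes>\<^sub>M lebesgue)"
    by (rule measurable_compose[OF p h'])
  then show ?thesis by simp
qed

locale mt = geo A lam
  for A :: "real^'n \<Rightarrow> real^'n^'n" and lam :: real +
  fixes Os Oc Om :: "(real^'n) set" and ga :: "real^'n \<Rightarrow> real^'n \<Rightarrow> real"
    and \<delta> \<alpha> K1 K2 :: real and f :: "real^'n \<Rightarrow> real"
  assumes ga_def: "ga = gamma_trunc A \<delta> \<alpha>"
    and Oc_def: "Oc = interaction_domain A \<delta> \<alpha> Os"
    and Om_def: "Om = Os \<union> Oc"
    and bnd: "bounded Os" and opn: "open Os"
    and dpos: "0 < \<delta>" and K1pos: "0 < K1" and K2pos: "0 < K2"
    and hh1: "\<And>x. x \<in> Om \<Longrightarrow> (\<integral>y\<in>Om. ga x y \<partial>lebesgue) \<le> 2 / \<delta>\<^sup>2"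
    and hh2: "\<And>x. x \<in> Om \<Longrightarrow> (\<integral>y\<in>Om. ga y x \<partial>lebesgue) \<le> K1"
    and hh3: "\<And>x. x \<in> Om \<Longrightarrow> (\<integral>y\<in>Oc. (ga x y + ga y x) / 2 \<partial>lebesgue) \<ge> K2"
    and hh4: "\<And>x. x \<in> Om \<Longrightarrow> (\<integral>y\<in>Om. (ga x y - ga y x) / 2 \<partial>lebesgue) \<ge> 0"
    and hf: "f \<in> L2 Om"
begin

definition "rq = \<delta>^2 * chi2_quantile CARD('n) \<alpha>"
definition "Eu = {y. \<exists>x\<in>Os. qform A x y \<le> rq}"

lemma IR: "y \<in> influence_region A \<delta> \<alpha> x \<longleftrightarrow> qform A x y \<le> rq"
  by (simp add: influence_region_def rq_def)

lemma Oc_eq: "Oc = Eu - Os" by (auto simp: Oc_def interaction_domain_def Eu_def IR)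
lemma Om_eq: "Om = Os \<union> Eu" by (auto simp: Om_def Oc_eq)
lemma disj: "Os \<inter> Oc = {}" by (auto simp: Oc_eq)
lemma Os_sub: "Os \<subseteq> Om" and Oc_sub: "Oc \<subseteq> Om" by (auto simp: Om_def)

lemma Eu_borel: "Eu \<in> sets borel"
proof -
  have "\<exists>C. (\<forall>n::nat. compact (C n)) \<and> (\<forall>n. C n \<subseteq> Os) \<and> \<Union>(range C) = Os"
    using opn by (metis open_Union_compact_subsets)
  then obtain C :: "nat \<Rightarrow> (real^'n) set" where C0: "\<forall>n. compact (C n)" "\<forall>n. C n \<subseteq> Os" "\<Union>(range C) = Os"
    by blast
  have C: "\<And>n. compact (C n)" "\<And>n. C n \<subseteq> Os" "\<Union>(range C) = Os" using C0 by auto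
  define T where "T n m = (C n \<times> cball 0 (real m)) \<inter> {p. qform A (fst p) (snd p) \<le> rq}" for n m :: nat
  have cT: "compact (T n m)" for n m unfolding T_def
    by (intro compact_Int_closed compact_Times C compact_cball closed_Collect_le q_cont continuous_on_const)
  have X: "snd ` T n m \<in> sets borel" for n m
    by (rule borel_closed, rule compact_imp_closed, rule compact_continuous_image[OF continuous_on_snd[OF continuous_on_id] cT])
  have eq: "Eu = (\<Union>n. \<Union>m. snd ` T n m)"
  proof (rule set_eqI, rule iffI)
    fix y assume "y \<in> Eu"
    then obtain x where x: "x \<in> Os" "qform A x y \<le> rq" by (auto simp: Eu_def)
    then obtain n where n: "x \<in> C n" using C(3) by auto
    obtain m :: nat where m: "norm y \<le> real m" using real_arch_simple by blast
    have "(x, y) \<in> T n m" using x n m by (simp add: T_def)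
    then show "y \<in> (\<Union>n. \<Union>m. snd ` T n m)" by force
  next
    fix y assume "y \<in> (\<Union>n. \<Union>m. snd ` T n m)"
    then obtain n m p where p: "p \<in> T n m" "y = snd p" by blast
    then show "y \<in> Eu" using C(2)[of n] by (cases p) (auto simp: T_def Eu_def)
  qed
  have U1: "(\<Union>m. snd ` T n m) \<in> sets borel" for n by (rule sets.countable_UN) (use X in blast)
  show ?thesis unfolding eq by (rule sets.countable_UN) (use U1 in blast)
qed

lemma leb_of_borel: "S \<in> sets borel \<Longrightarrow> S \<in> sets lebesgue" by simp

lemma Os_leb[measurable]: "Os \<in> sets lebesgue" using opn by simp
lemma Eu_leb: "Eu \<in> sets lebesgue" using Eu_borel by simp
lemma Oc_leb[measurable]: "Oc \<in> sets lebesgue" unfolding Oc_eq using Eu_leb Os_leb by auto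
lemma Om_leb[measurable]: "Om \<in> sets lebesgue" unfolding Om_eq using Eu_leb Os_leb by auto

lemma Om_bounded: "bounded Om"
proof -
  define s where "s x = (\<Sum>i\<in>UNIV. \<Sum>j\<in>UNIV. \<bar>A x $ i $ j\<bar>)" for x
  have sc: "continuous_on UNIV s" unfolding s_def by (intro continuous_intros contA)
  have "compact (s ` closure Os)"
    by (rule compact_continuous_image[OF continuous_on_subset[OF sc]]) (use bnd in auto)
  then obtain B where B: "\<And>x. x \<in> closure Os \<Longrightarrow> \<bar>s x\<bar> \<le> B"
    using compact_imp_bounded[of "s ` closure Os"] by (auto simp: bounded_iff)
  obtain Bs where Bs: "\<And>x. x \<in> Os \<Longrightarrow> norm x \<le> Bs" using bnd by (auto simp: bounded_iff)
  define R where "R = B * sqrt (\<bar>rq\<bar> / lam)"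
  have "norm y \<le> Bs + R" if y: "y \<in> Eu" for y
  proof -
    obtain x where x: "x \<in> Os" "qform A x y \<le> rq" using y by (auto simp: Eu_def)
    define z where "z = matrix_inv (A x) *v (y - x)"
    have yx: "y - x = A x *v z" unfolding z_def by (simp add: Ainv)
    have "norm (y - x) \<le> onorm ((*v) (A x)) * norm z" unfolding yx by (rule onorm) simp
    also have "\<dots> \<le> s x * norm z"
      by (rule mult_right_mono[OF _ norm_ge_zero]) (simp add: s_def onorm_le_matrix_component_sum)
    also have "\<dots> \<le> B * norm z"
    proof -
      have "\<bar>s x\<bar> \<le> B" using B[of x] x(1) closure_subset[of Os] by blast
      then have "s x \<le> B" by linarith
      then show ?thesis by (rule mult_right_mono[OF _ norm_ge_zero])
    qed
    also have "\<dots> \<le> R"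
    proof -
      have "lam * (norm z)^2 \<le> rq" using q_lower[of x y] x(2) by (simp add: z_def)
      then have "(norm z)^2 \<le> \<bar>rq\<bar> / lam" using lam by (simp add: field_simps)
      then have "norm z \<le> sqrt (\<bar>rq\<bar> / lam)" by (simp add: real_le_rsqrt)
      moreover have "0 \<le> B"
      proof -
        have "\<bar>s x\<bar> \<le> B" using B[of x] x(1) closure_subset[of Os] by blast
        then show ?thesis by linarith
      qed
      ultimately show ?thesis unfolding R_def by (rule mult_left_mono)
    qed
    finally have "norm (y - x) \<le> R" .
    then show ?thesis using Bs[OF x(1)] norm_triangle_sub[of y x] by linarith
  qed
  then have "bounded Eu" by (auto simp: bounded_iff)
  then show ?thesis unfolding Om_eq using bnd by simp
qed

lemma det_lb: "\<exists>m0>0. \<forall>x\<in>Om. m0 \<le> det ((\<delta>^2) *\<^sub>R A x)"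
proof (cases "Om = {}")
  case True then show ?thesis by (auto intro: exI[of _ 1])
next
  case False
  have "compact (closure Om)" using Om_bounded by simp
  moreover have "closure Om \<noteq> {}" using False by simp
  moreover have "continuous_on (closure Om) (\<lambda>x. det ((\<delta>^2) *\<^sub>R A x))"
    by (rule continuous_on_subset[OF detd_cont]) simp
  ultimately obtain x0 where x0: "x0 \<in> closure Om" "\<forall>y\<in>closure Om. det ((\<delta>^2) *\<^sub>R A x0) \<le> det ((\<delta>^2) *\<^sub>R A y)"
    using continuous_attains_inf by blast
  show ?thesis
    using x0 closure_subset detdA_pos[of "\<delta>^2" x0] dpos by (intro exI[of _ "det ((\<delta>^2) *\<^sub>R A x0)"]) auto
qed

lemma ga_nn: "0 \<le> ga x y"
proof -
  have "0 < (2 * pi) ^ CARD('n) * det ((\<delta>^2) *\<^sub>R A x)" using detdA_pos[of "\<delta>^2" x] dpos by simp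
  then show ?thesis by (simp add: ga_def gamma_trunc_def gamma_kernel_def)
qed

lemma ga_bound: "\<exists>Cg. \<forall>x\<in>Om. \<forall>y. ga x y \<le> Cg"
proof -
  obtain m0 where m0: "m0 > 0" "\<forall>x\<in>Om. m0 \<le> det ((\<delta>^2) *\<^sub>R A x)" using det_lb by blast
  define Cg where "Cg = 2 / \<delta>^2 * (1 / sqrt ((2 * pi) ^ CARD('n) * m0))"
  have "ga x y \<le> Cg" if x: "x \<in> Om" for x y
  proof -
    have P: "(2 * pi) ^ CARD('n) * m0 \<le> (2 * pi) ^ CARD('n) * det ((\<delta>^2) *\<^sub>R A x)"
      using m0 x by simp
    have P0: "0 < (2 * pi) ^ CARD('n) * m0" using m0 by simp
    have Pd: "0 < (2 * pi) ^ CARD('n) * det ((\<delta>^2) *\<^sub>R A x)" using P P0 by linarith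
    have s: "1 / sqrt ((2 * pi) ^ CARD('n) * det ((\<delta>^2) *\<^sub>R A x)) \<le> 1 / sqrt ((2 * pi) ^ CARD('n) * m0)"
      using P P0 Pd by (intro divide_left_mono real_sqrt_le_mono mult_pos_pos) auto
    have e: "exp (- qform A x y / (2 * \<delta>\<^sup>2)) \<le> 1" using q_nn[of x y] dpos by simp
    have gk: "gamma_kernel A \<delta> x y \<le> Cg"
    proof -
      have "gamma_kernel A \<delta> x y = 2 / \<delta>^2 * (1 / sqrt ((2 * pi) ^ CARD('n) * det ((\<delta>^2) *\<^sub>R A x))) * exp (- qform A x y / (2 * \<delta>\<^sup>2))"
        by (simp add: gamma_kernel_def)
      also have "\<dots> \<le> 2 / \<delta>^2 * (1 / sqrt ((2 * pi) ^ CARD('n) * m0)) * 1"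
        using s e P0 dpos by (intro mult_mono mult_left_mono) auto
      finally show ?thesis by (simp add: Cg_def)
    qed
    have "0 \<le> Cg" unfolding Cg_def using P0 by simp
    then show ?thesis using gk by (simp add: ga_def gamma_trunc_def)
  qed
  then show ?thesis by blast
qed

lemma ga_borel: "(\<lambda>p. ga (fst p) (snd p)) \<in> borel_measurable borel"
proof -
  define S where "S = {p::(real^'n) \<times> (real^'n). qform A (fst p) (snd p) \<le> rq}"
  have S: "closed S" unfolding S_def by (intro closed_Collect_le q_cont continuous_on_const)
  have eq: "(\<lambda>p. ga (fst p) (snd p)) = (\<lambda>p. indicator S p * gamma_kernel A \<delta> (fst p) (snd p))"
    by (auto simp: fun_eq_iff ga_def gamma_trunc_def S_def IR indicator_def)
  have gm: "(\<lambda>p::(real^'n) \<times> (real^'n). gamma_kernel A \<delta> (fst p) (snd p)) \<in> borel_measurable borel"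
    by (rule borel_measurable_continuous_onI[OF gk_cont[OF dpos]])
  show ?thesis unfolding eq using S gm by (intro borel_measurable_times borel_measurable_indicator) auto
qed

lemma ga_m[measurable]: "(\<lambda>p. ga (fst p) (snd p)) \<in> borel_measurable (lebesgue \<Otimes>\<^sub>M lebesgue)"
  by (rule borel_to_leb_pair[OF ga_borel])

lemma ga_sw[measurable]: "(\<lambda>p. ga (snd p) (fst p)) \<in> borel_measurable (lebesgue \<Otimes>\<^sub>M lebesgue)"
proof -
  have "(\<lambda>p. (\<lambda>p. ga (fst p) (snd p)) ((\<lambda>(x,y). (y,x)) p)) \<in> borel_measurable (lebesgue \<Otimes>\<^sub>M lebesgue)"
    by (rule measurable_compose[OF measurable_pair_swap' ga_m])
  then show ?thesis by (simp add: case_prod_unfold)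
qed

definition "G x y = indicator Om x * indicator Om y * ga x y"
definition "f' x = indicator Om x * f x"

lemma Gm: "(\<lambda>p. G (fst p) (snd p)) \<in> borel_measurable (lebesgue \<Otimes>\<^sub>M lebesgue)"
  unfolding G_def by measurable

lemma G_nn: "0 \<le> G x y" by (simp add: G_def ga_nn)

lemma Om_fin: "emeasure lebesgue Om < \<infinity>"
  using bounded_set_imp_lmeasurable[OF Om_bounded Om_leb] by (simp add: fmeasurable_def)

lemma Gint1: "integrable lebesgue (\<lambda>y. G x y)"
proof -
  obtain Cg where Cg: "\<forall>x\<in>Om. \<forall>y. ga x y \<le> Cg" using ga_bound by blast
  have m: "(\<lambda>y. G x y) \<in> borel_measurable lebesgue"
    using measurable_Pair2[OF Gm, of x] by simp
  show ?thesis
  proof (rule Bochner_Integration.integrable_bound[OF _ m])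
    show "integrable lebesgue (\<lambda>y. Cg * indicator Om y)" using Om_fin by simp
    show "AE y in lebesgue. norm (G x y) \<le> norm (Cg * indicator Om y)"
    proof (rule AE_I2)
      fix y show "norm (G x y) \<le> norm (Cg * indicator Om y)"
      proof (cases "x \<in> Om \<and> y \<in> Om")
        case True
        then have "ga x y \<le> Cg" using Cg by blast
        moreover have "0 \<le> ga x y" by (rule ga_nn)
        ultimately show ?thesis using True by (simp add: G_def abs_if)
      next
        case False then show ?thesis by (auto simp: G_def)
      qed
    qed
  qed
qed

lemma Gint2: "integrable lebesgue (\<lambda>y. G y x)"
proof -
  obtain Cg where Cg: "\<forall>x\<in>Om. \<forall>y. ga x y \<le> Cg" using ga_bound by blast
  have m: "(\<lambda>y. G y x) \<in> borel_measurable lebesgue"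
  proof -
    have "(\<lambda>p. G (snd p) (fst p)) \<in> borel_measurable (lebesgue \<Otimes>\<^sub>M lebesgue)"
      unfolding G_def by measurable
    from measurable_Pair2[OF this, of x] show ?thesis by simp
  qed
  show ?thesis
  proof (rule Bochner_Integration.integrable_bound[OF _ m])
    show "integrable lebesgue (\<lambda>y. Cg * indicator Om y)" using Om_fin by simp
    show "AE y in lebesgue. norm (G y x) \<le> norm (Cg * indicator Om y)"
    proof (rule AE_I2)
      fix y show "norm (G y x) \<le> norm (Cg * indicator Om y)"
      proof (cases "x \<in> Om \<and> y \<in> Om")
        case True
        then have "ga y x \<le> Cg" using Cg by blast
        moreover have "0 \<le> ga y x" by (rule ga_nn)
        ultimately show ?thesis using True by (simp add: G_def abs_if)
      next
        case False then show ?thesis by (auto simp: G_def)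
      qed
    qed
  qed
qed

lemma G_in: "x \<in> Om \<Longrightarrow> (\<integral>y. G x y \<partial>lebesgue) = (\<integral>y\<in>Om. ga x y \<partial>lebesgue)"
  by (simp add: G_def set_lebesgue_integral_def)
lemma G_in2: "x \<in> Om \<Longrightarrow> (\<integral>y. G y x \<partial>lebesgue) = (\<integral>y\<in>Om. ga y x \<partial>lebesgue)"
  by (simp add: G_def set_lebesgue_integral_def mult_ac)

lemma H1: "(\<integral>y. G x y \<partial>lebesgue) \<le> 2 / \<delta>^2"
proof (cases "x \<in> Om")
  case True then show ?thesis using hh1[OF True] G_in[OF True] by simp
next
  case False then have "\<And>y. G x y = 0" by (simp add: G_def)
  then show ?thesis by simp
qed
lemma H2: "(\<integral>y. G y x \<partial>lebesgue) \<le> K1"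
proof (cases "x \<in> Om")
  case True then show ?thesis using hh2[OF True] G_in2[OF True] by simp
next
  case False then have "\<And>y. G y x = 0" by (simp add: G_def)
  then show ?thesis using K1pos by simp
qed

lemma H3: "x \<in> Os \<Longrightarrow> 2 * K2 \<le> (\<integral>y. indicator Oc y * (G x y + G y x) \<partial>lebesgue)"
proof -
  assume x: "x \<in> Os"
  then have xO: "x \<in> Om" using Os_sub by auto
  have "(\<integral>y. indicator Oc y * (G x y + G y x) \<partial>lebesgue) = (\<integral>y. 2 * (indicator Oc y *\<^sub>R ((ga x y + ga y x) / 2)) \<partial>lebesgue)"
    by (rule Bochner_Integration.integral_cong) (use xO Oc_sub in \<open>auto simp: G_def indicator_def\<close>)
  also have "\<dots> = 2 * (\<integral>y\<in>Oc. (ga x y + ga y x) / 2 \<partial>lebesgue)"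
    by (simp add: set_lebesgue_integral_def)
  finally show ?thesis using hh3[OF xO] by simp
qed

lemma H4: "x \<in> Os \<Longrightarrow> (\<integral>y. G y x \<partial>lebesgue) \<le> (\<integral>y. G x y \<partial>lebesgue)"
proof -
  assume x: "x \<in> Os"
  then have xO: "x \<in> Om" using Os_sub by auto
  have "(\<integral>y\<in>Om. (ga x y - ga y x) / 2 \<partial>lebesgue) = (\<integral>y. (G x y - G y x) / 2 \<partial>lebesgue)"
    unfolding set_lebesgue_integral_def
    by (rule Bochner_Integration.integral_cong) (use xO in \<open>auto simp: G_def indicator_def\<close>)
  also have "\<dots> = ((\<integral>y. G x y \<partial>lebesgue) - (\<integral>y. G y x \<partial>lebesgue)) / 2"
    using Gint1[of x] Gint2[of x] by simp
  finally show ?thesis using hh4[OF xO] by simp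
qed

lemma f_facts: "f' \<in> borel_measurable lebesgue" "integrable lebesgue (\<lambda>x. (f' x)^2)"
proof -
  have fm: "f \<in> borel_measurable (lebesgue_on Om)" and fi: "integrable (lebesgue_on Om) (\<lambda>x. (f x)^2)"
    using hf by (auto simp: L2_def)
  show "f' \<in> borel_measurable lebesgue"
    using fm by (subst (asm) borel_measurable_restrict_space_iff) (auto simp: f'_def[abs_def])
  have "integrable lebesgue (\<lambda>x. indicator Om x *\<^sub>R (f x)^2)"
    using fi by (subst (asm) integrable_restrict_space) auto
  then show "integrable lebesgue (\<lambda>x. (f' x)^2)"
    by (rule Bochner_Integration.integrable_cong[THEN iffD1, rotated 2]) (auto simp: f'_def indicator_def)
qed

sublocale N: nl lebesgue Os Oc G "2 / \<delta>^2" K1 K2 f'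
  by (rule nl.intro[OF sf_lebesgue Os_leb Oc_leb disj Gm G_nn Gint1 Gint2 H1 H2 H3 H4 K2pos _ f_facts(1) f_facts(2)])
     (use dpos in \<open>auto intro!: divide_pos_pos\<close>)


definition "Sraw w x = (\<integral>y. (w x - w y) * G x y \<partial>lebesgue)"

lemma Gm'[measurable]: "(\<lambda>p. G (fst p) (snd p)) \<in> borel_measurable (lebesgue \<Otimes>\<^sub>M lebesgue)"
  by (rule Gm)

lemma Gx_m[measurable]: "(\<lambda>y. G x y) \<in> borel_measurable lebesgue"
  using Gint1[of x] by simp

lemma Sraw_m:
  assumes [measurable]: "w \<in> borel_measurable lebesgue"
  shows "Sraw w \<in> borel_measurable lebesgue"
  unfolding Sraw_def by (rule sigma_finite_measure.borel_measurable_lebesgue_integral[OF sf_lebesgue]) measurable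

lemma Sraw_Sop:
  assumes w: "w \<in> N.L2s"
  shows "AE x in lebesgue. Sraw w x = N.Sop w x"
  using N.K_AE_int[OF w]
proof eventually_elim
  case (elim x)
  have "Sraw w x = (\<integral>y. w x * G x y - w y * G x y \<partial>lebesgue)"
    unfolding Sraw_def by (rule Bochner_Integration.integral_cong) (auto simp: algebra_simps)
  also have "\<dots> = w x * (\<integral>y. G x y \<partial>lebesgue) - (\<integral>y. w y * G x y \<partial>lebesgue)"
    using elim Gint1[of x] by simp
  finally show ?case by (simp add: N.Sop_def N.a_def N.Kop_def)
qed

lemma inner_eq:
  assumes x: "x \<in> Om"
  shows "(\<integral>y. (w x - w y) * v x * ga x y \<partial>lebesgue_on Om) = v x * Sraw (\<lambda>z. indicator Om z * w z) x"
proof -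
  have "(\<integral>y. (w x - w y) * v x * ga x y \<partial>lebesgue_on Om)
        = (\<integral>y. indicator Om y *\<^sub>R ((w x - w y) * v x * ga x y) \<partial>lebesgue)"
    by (rule integral_restrict_space) simp
  also have "\<dots> = (\<integral>y. v x * ((indicator Om x * w x - indicator Om y * w y) * G x y) \<partial>lebesgue)"
    by (rule Bochner_Integration.integral_cong) (use x in \<open>auto simp: G_def indicator_def\<close>)
  also have "\<dots> = v x * Sraw (\<lambda>z. indicator Om z * w z) x" by (simp add: Sraw_def)
  finally show ?thesis .
qed

lemma space_Om: "space (lebesgue_on Om) = Om" by (simp add: space_restrict_space)

lemma AE_Om: "(AE x in lebesgue_on Om. P x) \<longleftrightarrow> (AE x in lebesgue. x \<in> Om \<longrightarrow> P x)"
  by (rule AE_restrict_space_iff) simp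

lemma L2s_to_L2n0:
  assumes v: "v \<in> N.L2s" and z: "\<And>x. x \<in> Oc \<Longrightarrow> v x = 0"
  shows "v \<in> L2_n0 Om Oc"
proof -
  have [measurable]: "v \<in> borel_measurable lebesgue" using v by (rule N.L2s_m)
  have "integrable lebesgue (\<lambda>x. (v x)^2 * indicator Om x)"
    by (rule integrable_real_mult_indicator[OF Om_leb N.L2s_i[OF v]])
  then have "integrable (lebesgue_on Om) (\<lambda>x. (v x)^2)"
    by (subst integrable_restrict_space) (auto simp: mult.commute)
  moreover have "v \<in> borel_measurable (lebesgue_on Om)" by (rule measurable_restrict_space1) simp
  ultimately show ?thesis using z by (auto simp: L2_n0_def L2_def intro!: AE_I2)
qed

lemma L2n0_facts:
  assumes w: "w \<in> L2_n0 Om Oc"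
  shows "(\<lambda>x. indicator Om x * w x) \<in> N.L2s"
    and "AE x in lebesgue. x \<in> Oc \<longrightarrow> w x = 0"
proof -
  have wm: "w \<in> borel_measurable (lebesgue_on Om)" and wi: "integrable (lebesgue_on Om) (\<lambda>x. (w x)^2)"
    and wa: "AE x in lebesgue_on Om. x \<in> Oc \<longrightarrow> w x = 0"
    using w by (auto simp: L2_n0_def L2_def)
  have m: "(\<lambda>x. indicator Om x * w x) \<in> borel_measurable lebesgue"
    using wm by (subst (asm) borel_measurable_restrict_space_iff) auto
  have "integrable lebesgue (\<lambda>x. indicator Om x *\<^sub>R (w x)^2)"
    using wi by (subst (asm) integrable_restrict_space) auto
  then have "integrable lebesgue (\<lambda>x. (indicator Om x * w x)^2)"
    by (rule Bochner_Integration.integrable_cong[THEN iffD1, rotated 2]) (auto simp: indicator_def)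
  then show "(\<lambda>x. indicator Om x * w x) \<in> N.L2s" using m by (simp add: N.L2s_def)
  show "AE x in lebesgue. x \<in> Oc \<longrightarrow> w x = 0"
    using wa unfolding AE_Om using Oc_sub by (auto elim!: eventually_mono)
qed

theorem result:
  "\<exists>u \<in> L2_n0 Om Oc.
      (\<forall>v \<in> L2_n0 Om Oc. bform ga Om u v = Ffun Om f v)
    \<and> (\<forall>w \<in> L2_n0 Om Oc. (\<forall>v \<in> L2_n0 Om Oc. bform ga Om w v = Ffun Om f v)
          \<longrightarrow> (AE x in lebesgue_on Om. w x = u x))
    \<and> L2_norm Om u \<le> 2 / K2 * L2_norm Om f"
proof -
  obtain u where uV: "u \<in> N.V" and ueq: "AE x in lebesgue. x \<in> Os \<longrightarrow> N.Sop u x = f' x"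
    and unorm: "K2^2 * (\<integral>x. (u x)^2 \<partial>lebesgue) \<le> (\<integral>x. (indicator Os x * f' x)^2 \<partial>lebesgue)"
    and uniq: "\<And>w. w \<in> N.V \<Longrightarrow> (AE x in lebesgue. x \<in> Os \<longrightarrow> N.Sop w x = f' x) \<Longrightarrow> (AE x in lebesgue. w x = u x)"
    using N.abs_main by blast
  have uL: "u \<in> N.L2s" using uV by (rule N.V_L2s)
  have [measurable]: "u \<in> borel_measurable lebesgue" using uL by (rule N.L2s_m)
  have u0: "x \<notin> Os \<Longrightarrow> u x = 0" for x using uV by (rule N.V_zero)
  have uOc: "x \<in> Oc \<Longrightarrow> u x = 0" for x using u0 disj by auto
  have uOm: "x \<notin> Om \<Longrightarrow> u x = 0" for x using u0 Os_sub by blast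
  have uind: "(\<lambda>z. indicator Om z * u z) = u" using u0 Os_sub by (auto simp: fun_eq_iff indicator_def)
  have fm: "f \<in> borel_measurable (lebesgue_on Om)" using hf by (simp add: L2_def)
  have f'm[measurable]: "f' \<in> borel_measurable lebesgue" by (rule f_facts(1))
  have f'L: "f' \<in> N.L2s" using f_facts by (simp add: N.L2s_def)
  show ?thesis
  proof (intro bexI conjI ballI impI)
    show uL2: "u \<in> L2_n0 Om Oc" by (rule L2s_to_L2n0[OF uL uOc])
    fix v assume v: "v \<in> L2_n0 Om Oc"
    have vm: "v \<in> borel_measurable (lebesgue_on Om)" using v by (simp add: L2_n0_def L2_def)
    have vz: "AE x in lebesgue. x \<in> Oc \<longrightarrow> v x = 0" by (rule L2n0_facts(2)[OF v])
    have "bform ga Om u v = (\<integral>x. v x * Sraw u x \<partial>lebesgue_on Om)"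
      unfolding bform_def
      by (rule Bochner_Integration.integral_cong) (auto simp: space_Om inner_eq uind)
    also have "\<dots> = (\<integral>x. f x * v x \<partial>lebesgue_on Om)"
    proof (rule integral_cong_AE)
      show "(\<lambda>x. v x * Sraw u x) \<in> borel_measurable (lebesgue_on Om)"
        using vm measurable_restrict_space1[OF Sraw_m[of u]] by measurable
      show "(\<lambda>x. f x * v x) \<in> borel_measurable (lebesgue_on Om)" using vm fm by measurable
      show "AE x in lebesgue_on Om. v x * Sraw u x = f x * v x"
        unfolding AE_Om using Sraw_Sop[OF uL] ueq vz
      proof eventually_elim
        case (elim x)
        show ?case
        proof
          assume xO: "x \<in> Om"
          show "v x * Sraw u x = f x * v x"
          proof (cases "x \<in> Os")
            case True
            then have "Sraw u x = f x" using elim xO by (simp add: f'_def)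
            then show ?thesis by simp
          next
            case False
            then have "x \<in> Oc" using xO by (simp add: Om_def)
            then show ?thesis using elim by simp
          qed
        qed
      qed
    qed
    finally show "bform ga Om u v = Ffun Om f v" by (simp add: Ffun_def)
  next
    fix w assume w: "w \<in> L2_n0 Om Oc" and hw: "\<forall>v\<in>L2_n0 Om Oc. bform ga Om w v = Ffun Om f v"
    define w1 where "w1 x = indicator Om x * w x" for x
    define w0 where "w0 x = indicator Os x * w1 x" for x
    have w1L: "w1 \<in> N.L2s" unfolding w1_def by (rule L2n0_facts(1)[OF w])
    have [measurable]: "w1 \<in> borel_measurable lebesgue" using w1L by (rule N.L2s_m)
    have wz: "AE x in lebesgue. x \<in> Oc \<longrightarrow> w x = 0" by (rule L2n0_facts(2)[OF w])
    have w0V: "w0 \<in> N.V" unfolding w0_def by (rule N.VI[OF N.L2s_ind[OF w1L]]) simp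
    have w0L: "w0 \<in> N.L2s" using w0V by (rule N.V_L2s)
    have [measurable]: "w0 \<in> borel_measurable lebesgue" using w0L by (rule N.L2s_m)
    have w10: "AE y in lebesgue. w1 y = w0 y"
      using wz by eventually_elim (auto simp: w1_def w0_def indicator_def Om_def)
    have Sw: "AE x in lebesgue. x \<in> Os \<longrightarrow> Sraw w1 x = N.Sop w0 x"
      using Sraw_Sop[OF w0L]
    proof eventually_elim
      case (elim x)
      show ?case
      proof
        assume x: "x \<in> Os"
        have "Sraw w1 x = Sraw w0 x" unfolding Sraw_def
        proof (rule integral_cong_AE)
          show "(\<lambda>y. (w1 x - w1 y) * G x y) \<in> borel_measurable lebesgue" by measurable
          show "(\<lambda>y. (w0 x - w0 y) * G x y) \<in> borel_measurable lebesgue" by measurable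
          have e: "w1 x = w0 x" using x by (simp add: w0_def)
          show "AE y in lebesgue. (w1 x - w1 y) * G x y = (w0 x - w0 y) * G x y"
            using w10 by eventually_elim (simp add: e)
        qed
        then show "Sraw w1 x = N.Sop w0 x" using elim by simp
      qed
    qed
    define v where "v x = indicator Os x * (N.Sop w0 x - f' x)" for x
    have vL: "v \<in> N.L2s" unfolding v_def
      by (rule N.L2s_ind[OF N.L2s_diff[OF N.Sop_L2(1)[OF w0L] f'L]])
    have [measurable]: "v \<in> borel_measurable lebesgue" using vL by (rule N.L2s_m)
    have v0: "x \<notin> Os \<Longrightarrow> v x = 0" for x by (simp add: v_def)
    have vL2: "v \<in> L2_n0 Om Oc" by (rule L2s_to_L2n0[OF vL]) (use v0 disj in auto)
    have SL: "N.Sop w0 \<in> N.L2s" by (rule N.Sop_L2(1)[OF w0L])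
    have [measurable]: "N.Sop w0 \<in> borel_measurable lebesgue" using SL by (rule N.L2s_m)
    have i1: "integrable lebesgue (\<lambda>x. v x * N.Sop w0 x)"
      by (rule L2_prod_integrable) (use N.L2s_i[OF vL] N.L2s_i[OF SL] in auto)
    have i2: "integrable lebesgue (\<lambda>x. v x * f' x)"
      by (rule L2_prod_integrable) (use N.L2s_i[OF vL] N.L2s_i[OF f'L] in auto)
    have "bform ga Om w v = (\<integral>x. v x * Sraw w1 x \<partial>lebesgue_on Om)"
      unfolding bform_def w1_def
      by (rule Bochner_Integration.integral_cong) (auto simp: space_Om inner_eq)
    also have "\<dots> = (\<integral>x. v x * N.Sop w0 x \<partial>lebesgue_on Om)"
    proof (rule integral_cong_AE)
      have Sm[measurable]: "Sraw w1 \<in> borel_measurable lebesgue" by (rule Sraw_m) measurable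
      show "(\<lambda>x. v x * Sraw w1 x) \<in> borel_measurable (lebesgue_on Om)"
        by (rule measurable_restrict_space1) measurable
      show "(\<lambda>x. v x * N.Sop w0 x) \<in> borel_measurable (lebesgue_on Om)"
        by (rule measurable_restrict_space1) measurable
      show "AE x in lebesgue_on Om. v x * Sraw w1 x = v x * N.Sop w0 x"
        unfolding AE_Om using Sw by eventually_elim (auto simp: v_def)
    qed
    also have "\<dots> = (\<integral>x. v x * N.Sop w0 x \<partial>lebesgue)"
      by (subst integral_restrict_space) (use Os_sub in \<open>auto intro!: Bochner_Integration.integral_cong simp: v_def indicator_def\<close>)
    finally have B: "bform ga Om w v = (\<integral>x. v x * N.Sop w0 x \<partial>lebesgue)" .
    have F: "Ffun Om f v = (\<integral>x. v x * f' x \<partial>lebesgue)"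
      unfolding Ffun_def
      by (subst integral_restrict_space) (use Os_sub in \<open>auto intro!: Bochner_Integration.integral_cong simp: v_def f'_def indicator_def\<close>)
    have "(\<integral>x. v x * N.Sop w0 x \<partial>lebesgue) = (\<integral>x. v x * f' x \<partial>lebesgue)"
      using hw vL2 B F by simp
    then have "(\<integral>x. v x * N.Sop w0 x - v x * f' x \<partial>lebesgue) = 0" using i1 i2 by simp
    moreover have "(\<lambda>x. v x * N.Sop w0 x - v x * f' x) = (\<lambda>x. (v x)^2)"
      by (auto simp: fun_eq_iff v_def indicator_def power2_eq_square algebra_simps)
    ultimately have "(\<integral>x. (v x)^2 \<partial>lebesgue) = 0" by simp
    then have "AE x in lebesgue. (v x)^2 = 0"
      by (subst integral_nonneg_eq_0_iff_AE[symmetric]) (use N.L2s_i[OF vL] in auto)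
    then have "AE x in lebesgue. x \<in> Os \<longrightarrow> N.Sop w0 x = f' x"
      by eventually_elim (auto simp: v_def)
    then have wu: "AE x in lebesgue. w0 x = u x" by (rule uniq[OF w0V])
    show "AE x in lebesgue_on Om. w x = u x"
      unfolding AE_Om using wu wz
      by eventually_elim (auto simp: w0_def w1_def Om_def uOc)
  next
    have iu: "integrable lebesgue (\<lambda>x. (u x)^2)" by (rule N.L2s_i[OF uL])
    have if': "integrable lebesgue (\<lambda>x. (f' x)^2)" by (rule N.L2s_i[OF f'L])
    have nu: "L2_norm Om u = sqrt (\<integral>x. (u x)^2 \<partial>lebesgue)"
      unfolding L2_norm_def
      by (subst integral_restrict_space) (use uOm in \<open>auto intro!: Bochner_Integration.integral_cong simp: indicator_def\<close>)
    have nf: "L2_norm Om f = sqrt (\<integral>x. (f' x)^2 \<partial>lebesgue)"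
      unfolding L2_norm_def
      by (subst integral_restrict_space) (auto intro!: Bochner_Integration.integral_cong simp: f'_def indicator_def)
    have "(\<integral>x. (indicator Os x * f' x)^2 \<partial>lebesgue) \<le> (\<integral>x. (f' x)^2 \<partial>lebesgue)"
      by (rule integral_mono[OF N.L2s_i[OF N.L2s_ind[OF f'L]] if']) (auto simp: indicator_def)
    then have "K2^2 * (\<integral>x. (u x)^2 \<partial>lebesgue) \<le> (\<integral>x. (f' x)^2 \<partial>lebesgue)" using unorm by linarith
    then have "sqrt (K2^2 * (\<integral>x. (u x)^2 \<partial>lebesgue)) \<le> sqrt (\<integral>x. (f' x)^2 \<partial>lebesgue)"
      by (rule real_sqrt_le_mono)
    then have "K2 * L2_norm Om u \<le> L2_norm Om f"
      using K2pos by (simp add: nu nf real_sqrt_mult)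
    then have "L2_norm Om u \<le> L2_norm Om f / K2" using K2pos by (simp add: field_simps)
    also have "\<dots> \<le> 2 / K2 * L2_norm Om f"
    proof -
      have "0 \<le> L2_norm Om f" by (simp add: nf)
      then show ?thesis using K2pos by (simp add: field_simps)
    qed
    finally show "L2_norm Om u \<le> 2 / K2 * L2_norm Om f" .
  qed
qed

end

theorem mainTheorem1:
  fixes \<Omega>s :: "(real^'n) set"
    and A :: "real^'n \<Rightarrow> real^'n^'n"
    and lam \<Lambda> \<delta> \<alpha> K1 K2 :: real
    and f :: "real^'n \<Rightarrow> real"
  defines "\<gamma>a \<equiv> gamma_trunc A \<delta> \<alpha>"
    and "\<Omega>c \<equiv> interaction_domain A \<delta> \<alpha> \<Omega>s"
    and "\<Omega> \<equiv> \<Omega>s \<union> interaction_domain A \<delta> \<alpha> \<Omega>s"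
  assumes dom: "bounded \<Omega>s" "lipschitz_domain \<Omega>s"
    and sym: "\<And>x. transpose (A x) = A x"
    and lip: "\<And>i j. \<exists>C. C-lipschitz_on UNIV (\<lambda>x. A x $ i $ j)"
    and ell_const: "0 < lam" "lam \<le> \<Lambda>"
    and ell: "\<And>x \<xi>. lam * (norm \<xi>)\<^sup>2 \<le> \<xi> \<bullet> (A x *v \<xi>) \<and> \<xi> \<bullet> (A x *v \<xi>) \<le> \<Lambda> * (norm \<xi>)\<^sup>2"
    and par: "0 < \<delta>" "0 < \<alpha>" "\<alpha> < 1"
    and K: "0 < K1" "0 < K2"
    and h1: "\<And>x. x \<in> \<Omega> \<Longrightarrow> (\<integral>y\<in>\<Omega>. \<gamma>a x y \<partial>lebesgue) \<le> 2 / \<delta>\<^sup>2"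
    and h2: "\<And>x. x \<in> \<Omega> \<Longrightarrow> (\<integral>y\<in>\<Omega>. \<gamma>a y x \<partial>lebesgue) \<le> K1"
    and h3: "\<And>x. x \<in> \<Omega> \<Longrightarrow> (\<integral>y\<in>\<Omega>c. (\<gamma>a x y + \<gamma>a y x) / 2 \<partial>lebesgue) \<ge> K2"
    and h4: "\<And>x. x \<in> \<Omega> \<Longrightarrow> (\<integral>y\<in>\<Omega>. (\<gamma>a x y - \<gamma>a y x) / 2 \<partial>lebesgue) \<ge> 0"
    and hf: "f \<in> L2 \<Omega>"
  shows "\<exists>u \<in> L2_n0 \<Omega> \<Omega>c.
           (\<forall>v \<in> L2_n0 \<Omega> \<Omega>c. bform \<gamma>a \<Omega> u v = Ffun \<Omega> f v)
         \<and> (\<forall>w \<in> L2_n0 \<Omega> \<Omega>c. (\<forall>v \<in> L2_n0 \<Omega> \<Omega>c. bform \<gamma>a \<Omega> w v = Ffun \<Omega> f v)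
               \<longrightarrow> (AE x in lebesgue_on \<Omega>. w x = u x))
         \<and> L2_norm \<Omega> u \<le> 2 / K2 * L2_norm \<Omega> f"
proof -
  have contA: "\<And>i j. continuous_on UNIV (\<lambda>x. A x $ i $ j)"
  proof -
    fix i j
    obtain C where "C-lipschitz_on UNIV (\<lambda>x. A x $ i $ j)" using lip[of i j] by blast
    then show "continuous_on UNIV (\<lambda>x. A x $ i $ j)" by (rule lipschitz_on_continuous_on)
  qed
  have ellL: "\<And>x \<xi>. lam * (norm \<xi>)\<^sup>2 \<le> \<xi> \<bullet> (A x *v \<xi>)" using ell by blast
  have gi: "geo A lam" by (rule geo.intro[OF ellL ell_const(1) contA])
  have ga_eq: "\<gamma>a = gamma_trunc A \<delta> \<alpha>" using \<open>\<gamma>a \<equiv> gamma_trunc A \<delta> \<alpha>\<close> by simp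
  have Oc_eq: "\<Omega>c = interaction_domain A \<delta> \<alpha> \<Omega>s" using \<open>\<Omega>c \<equiv> interaction_domain A \<delta> \<alpha> \<Omega>s\<close> by simp
  have Om_eq: "\<Omega> = \<Omega>s \<union> \<Omega>c"
    using \<open>\<Omega>c \<equiv> interaction_domain A \<delta> \<alpha> \<Omega>s\<close> \<open>\<Omega> \<equiv> \<Omega>s \<union> interaction_domain A \<delta> \<alpha> \<Omega>s\<close> by simp
  have opn: "open \<Omega>s" using dom(2) by (simp add: lipschitz_domain_def)
  interpret M: mt A lam \<Omega>s \<Omega>c \<Omega> \<gamma>a \<delta> \<alpha> K1 K2 f
    by (rule mt.intro[OF gi], rule mt_axioms.intro[OF ga_eq Oc_eq Om_eq dom(1) opn par(1) K(1) K(2) h1 h2 h3 h4 hf])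
  show ?thesis by (rule M.result)
qed

end
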